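(* There exist probability measures $\mu,\nu$ on $\{0,1\}^{\mathbb{N}}$ such that $\mathbb{E}_{X\sim\mu}[X_iX_j]=\mathbb{E}_{X\sim\nu}[X_iX_j]$ for all $i,j\in\mathbb{N}$, while $\Delta_n(\mu)\to0$ and $\Delta_n(\nu)\to\tfrac12$ as $n\to\infty$.
   Context: For a probability measure $\mu$ on $\{0,1\}^{\mathbb{N}}$ and $n\ge1$, with $X^{(1)},\dots,X^{(n)}$ i.i.d. from $\mu$, $\Delta_n(\mu):=\mathbb{E}\sup_{j\in\mathbb{N}}\left|\frac1n\sum_{i=1}^nX^{(i)}_j-\mathbb{E}[X_j]\right|$. *)

theory Defs
  imports "HOL-Probability.Probability"
begin

definition bitspace :: "(nat \<Rightarrow> bool) measure" where
  "bitspace = PiM UNIV (\<lambda>_. count_space UNIV)"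

definition Delta :: "nat \<Rightarrow> (nat \<Rightarrow> bool) measure \<Rightarrow> real" where
  "Delta n \<mu> = (\<integral> xs. (SUP j. \<bar>(\<Sum>i<n. of_bool (xs i j)) / real n - (\<integral> x. of_bool (x j) \<partial>\<mu>)\<bar>)
        \<partial>(PiM {..<n} (\<lambda>_. \<mu>)))"

end

theory Submission
  imports Defs "HOL-Real_Asymp.Real_Asymp"
begin

datatype idx = IB | IY nat | IZ nat nat

definition Om :: "(idx \<Rightarrow> real) \<Rightarrow> (idx \<Rightarrow> bool) measure" where
  "Om r = PiM UNIV (\<lambda>t. measure_pmf (bernoulli_pmf (r t)))"

lemma Om_pps: "product_prob_space (\<lambda>t. measure_pmf (bernoulli_pmf (r t)))"
  by (rule product_prob_spaceI) (rule prob_space_measure_pmf)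

lemma prob_space_Om: "prob_space (Om r)"
proof -
  interpret product_prob_space "\<lambda>t. measure_pmf (bernoulli_pmf (r t))" UNIV by (rule Om_pps)
  show ?thesis unfolding Om_def by (rule P.prob_space_axioms)
qed

lemma space_Om: "space (Om r) = UNIV"
  by (simp add: Om_def space_PiM)

lemma meas_coord[measurable]: "(\<lambda>\<omega>. \<omega> t) \<in> measurable (Om r) (count_space UNIV)"
proof -
  have "(\<lambda>\<omega>. \<omega> t) \<in> measurable (Om r) (measure_pmf (bernoulli_pmf (r t)))"
    unfolding Om_def by (rule measurable_component_singleton) simp
  then show ?thesis by (simp add: measurable_def space_Om)
qed

lemma prodE:
  assumes J: "finite J" and f: "\<And>t. t \<in> J \<Longrightarrow> 0 \<le> r t \<and> r t \<le> 1"
  shows "(\<integral>\<omega>. (\<Prod>t\<in>J. f t (\<omega> t)) \<partial>Om r) = (\<Prod>t\<in>J. f t True * r t + f t False * (1 - r t))"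
proof -
  interpret product_prob_space "\<lambda>t. measure_pmf (bernoulli_pmf (r t))" UNIV by (rule Om_pps)
  let ?M = "\<lambda>t. measure_pmf (bernoulli_pmf (r t))"
  have "(\<integral>\<omega>. (\<Prod>t\<in>J. f t (\<omega> t)) \<partial>Om r) = (\<integral>x. (\<Prod>t\<in>J. f t (x t)) \<partial>distr (Om r) (PiM J ?M) (\<lambda>\<omega>. restrict \<omega> J))"
    unfolding Om_def
  proof (subst integral_distr)
    show "(\<lambda>x. \<Prod>t\<in>J. f t (x t)) \<in> borel_measurable (PiM J ?M)"
    proof (rule borel_measurable_prod)
      fix t assume "t \<in> J"
      show "(\<lambda>x. f t (x t)) \<in> borel_measurable (PiM J ?M)"
        by (rule measurable_compose[OF measurable_component_singleton[OF \<open>t \<in> J\<close>]]) simp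
    qed
  qed (auto intro!: measurable_restrict_subset)
  also have "\<dots> = (\<integral>x. (\<Prod>t\<in>J. f t (x t)) \<partial>PiM J ?M)"
    unfolding Om_def using J by (subst distr_PiM_restrict_finite) auto
  also have "\<dots> = (\<Prod>t\<in>J. (\<integral>x. f t x \<partial>?M t))"
    using J by (intro product_integral_prod) (auto intro!: integrable_measure_pmf_finite)
  also have "\<dots> = (\<Prod>t\<in>J. f t True * r t + f t False * (1 - r t))"
    using f by (intro prod.cong refl) simp
  finally show ?thesis .
qed

lemma monoE:
  assumes P: "finite P" and Q: "finite Q" and PQ: "P \<inter> Q = {}"
    and r: "\<And>t. t \<in> P \<union> Q \<Longrightarrow> 0 \<le> r t \<and> r t \<le> 1"
  shows "(\<integral>\<omega>. (\<Prod>t\<in>P. of_bool (\<omega> t)) * (\<Prod>t\<in>Q. 1 - of_bool (\<omega> t)) \<partial>Om r)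
       = (\<Prod>t\<in>P. r t) * (\<Prod>t\<in>Q. 1 - r t)"
proof -
  define f where "f = (\<lambda>t (v::bool). if t \<in> P then (of_bool v::real) else 1 - of_bool v)"
  have eq: "(\<Prod>t\<in>P. of_bool (\<omega> t)) * (\<Prod>t\<in>Q. 1 - of_bool (\<omega> t)) = (\<Prod>t\<in>P \<union> Q. f t (\<omega> t))" for \<omega>
    using P Q PQ by (subst prod.union_disjoint) (auto simp: f_def intro!: arg_cong2[where f="(*)"] prod.cong)
  have "(\<integral>\<omega>. (\<Prod>t\<in>P \<union> Q. f t (\<omega> t)) \<partial>Om r) = (\<Prod>t\<in>P \<union> Q. f t True * r t + f t False * (1 - r t))"
    using P Q r by (intro prodE) auto
  also have "\<dots> = (\<Prod>t\<in>P. r t) * (\<Prod>t\<in>Q. 1 - r t)"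
    using P Q PQ by (subst prod.union_disjoint) (auto simp: f_def intro!: arg_cong2[where f="(*)"] prod.cong)
  finally show ?thesis by (simp add: eq)
qed

lemma meas_comp_PiM:
  assumes "i \<in> I" "g \<in> borel_measurable M"
  shows "(\<lambda>x. g (x i)) \<in> borel_measurable (PiM I (\<lambda>_. M))"
  by (rule measurable_compose[OF measurable_component_singleton[OF assms(1)] assms(2)])

lemma bounded_integrable:
  fixes g :: "'a \<Rightarrow> real"
  assumes "prob_space M" "g \<in> borel_measurable M" "\<And>x. x \<in> space M \<Longrightarrow> \<bar>g x\<bar> \<le> B"
  shows "integrable M g"
proof -
  interpret prob_space M by fact
  show ?thesis using assms by (intro integrable_const_bound[where B=B]) auto
qed

lemma prod_one_except:
  fixes f :: "'i \<Rightarrow> real"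
  assumes "finite I" "i \<in> I" "\<And>j. j \<in> I \<Longrightarrow> j \<noteq> i \<Longrightarrow> f j = 1"
  shows "(\<Prod>j\<in>I. f j) = f i"
proof -
  have "(\<Prod>j\<in>I. f j) = f i * (\<Prod>j\<in>I - {i}. f j)"
    using assms(1,2) by (rule prod.remove)
  also have "(\<Prod>j\<in>I - {i}. f j) = 1"
    using assms(3) by (intro prod.neutral) auto
  finally show ?thesis by simp
qed

lemma prod_one_except2:
  fixes f :: "'i \<Rightarrow> real"
  assumes "finite I" "i \<in> I" "l \<in> I" "i \<noteq> l" "\<And>j. j \<in> I \<Longrightarrow> j \<noteq> i \<Longrightarrow> j \<noteq> l \<Longrightarrow> f j = 1"
  shows "(\<Prod>j\<in>I. f j) = f i * f l"
proof -
  have "(\<Prod>j\<in>I. f j) = f i * (\<Prod>j\<in>I - {i}. f j)"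
    using assms(1,2) by (rule prod.remove)
  also have "(\<Prod>j\<in>I - {i}. f j) = f l"
    using assms by (intro prod_one_except) auto
  finally show ?thesis by simp
qed

lemma PiM_single:
  fixes h :: "'a \<Rightarrow> real"
  assumes M: "prob_space M" and I: "finite I" "i \<in> I"
    and h: "h \<in> borel_measurable M" "\<And>x. x \<in> space M \<Longrightarrow> \<bar>h x\<bar> \<le> B"
  shows "(\<integral>x. h (x i) \<partial>PiM I (\<lambda>_. M)) = (\<integral>x. h x \<partial>M)"
proof -
  interpret product_prob_space "\<lambda>_. M" I by (rule product_prob_spaceI) (rule M)
  define f where "f = (\<lambda>i' (x::'a). if i' = i then h x else 1)"
  have eq: "(\<Prod>i'\<in>I. f i' (x i')) = h (x i)" for x
    using I by (subst prod_one_except[of I i]) (auto simp: f_def)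
  have "(\<integral>x. (\<Prod>i'\<in>I. f i' (x i')) \<partial>PiM I (\<lambda>_. M)) = (\<Prod>i'\<in>I. integral\<^sup>L M (f i'))"
  proof (intro product_integral_prod I)
    interpret prob_space M by fact
    show "integrable M (f i')" for i' unfolding f_def using bounded_integrable[OF M h] by (cases "i' = i") auto
  qed
  also have "\<dots> = integral\<^sup>L M (f i)"
    using I by (subst prod_one_except[of I i]) (auto simp: f_def prob_space.prob_space[OF M])
  finally have *: "(\<integral>x. (\<Prod>i'\<in>I. f i' (x i')) \<partial>PiM I (\<lambda>_. M)) = integral\<^sup>L M (f i)" .
  from * show ?thesis unfolding eq by (simp add: f_def)
qed

lemma PiM_pair:
  fixes h k :: "'a \<Rightarrow> real"
  assumes M: "prob_space M" and I: "finite I" "i \<in> I" "l \<in> I" "i \<noteq> l"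
    and h: "h \<in> borel_measurable M" "\<And>x. x \<in> space M \<Longrightarrow> \<bar>h x\<bar> \<le> B"
    and k: "k \<in> borel_measurable M" "\<And>x. x \<in> space M \<Longrightarrow> \<bar>k x\<bar> \<le> B'"
  shows "(\<integral>x. h (x i) * k (x l) \<partial>PiM I (\<lambda>_. M)) = (\<integral>x. h x \<partial>M) * (\<integral>x. k x \<partial>M)"
proof -
  interpret product_prob_space "\<lambda>_. M" I by (rule product_prob_spaceI) (rule M)
  define f where "f = (\<lambda>i' (x::'a). if i' = i then h x else if i' = l then k x else 1)"
  have eq: "(\<Prod>i'\<in>I. f i' (x i')) = h (x i) * k (x l)" for x
    using I by (subst prod_one_except2[of I i l]) (auto simp: f_def)
  have "(\<integral>x. (\<Prod>i'\<in>I. f i' (x i')) \<partial>PiM I (\<lambda>_. M)) = (\<Prod>i'\<in>I. integral\<^sup>L M (f i'))"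
  proof (intro product_integral_prod I)
    interpret prob_space M by fact
    show "integrable M (f i')" for i' unfolding f_def using bounded_integrable[OF M h] bounded_integrable[OF M k] by (cases "i' = i"; cases "i' = l") auto
  qed
  also have "\<dots> = integral\<^sup>L M (f i) * integral\<^sup>L M (f l)"
    using I by (subst prod_one_except2[of I i l]) (auto simp: f_def prob_space.prob_space[OF M])
  finally have *: "(\<integral>x. (\<Prod>i'\<in>I. f i' (x i')) \<partial>PiM I (\<lambda>_. M)) = integral\<^sup>L M (f i) * integral\<^sup>L M (f l)" .
  from * show ?thesis unfolding eq using I by (simp add: f_def)
qed

lemma PiM_power:
  fixes h :: "'a \<Rightarrow> real"
  assumes M: "prob_space M" and I: "finite I"
    and h: "h \<in> borel_measurable M" "\<And>x. x \<in> space M \<Longrightarrow> \<bar>h x\<bar> \<le> B"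
  shows "(\<integral>x. (\<Prod>i\<in>I. h (x i)) \<partial>PiM I (\<lambda>_. M)) = (\<integral>x. h x \<partial>M) ^ card I"
proof -
  interpret product_prob_space "\<lambda>_. M" I by (rule product_prob_spaceI) (rule M)
  show ?thesis using I h M by (subst product_integral_prod) (auto intro!: bounded_integrable)
qed

lemma abs_mult_le1: "\<bar>a::real\<bar> \<le> 1 \<Longrightarrow> \<bar>b\<bar> \<le> 1 \<Longrightarrow> \<bar>a * b\<bar> \<le> 1"
  by (simp add: abs_mult mult_le_one)

lemma lln:
  fixes g :: "'a \<Rightarrow> real"
  assumes M: "prob_space M" and g: "g \<in> borel_measurable M" "\<And>x. x \<in> space M \<Longrightarrow> 0 \<le> g x \<and> g x \<le> 1"
    and n: "n > 0" and e: "e > 0"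
  shows "(\<integral>xs. \<bar>(\<Sum>i<n. g (xs i)) / real n - (\<integral>x. g x \<partial>M)\<bar> \<partial>PiM {..<n} (\<lambda>_. M)) \<le> e + 1 / (real n * e)"
proof -
  interpret M: prob_space M by fact
  interpret product_prob_space "\<lambda>_. M" "{..<n}" by (rule product_prob_spaceI) (rule M)
  let ?P = "PiM {..<n} (\<lambda>_. M)"
  define m where "m = (\<integral>x. g x \<partial>M)"
  have m0: "0 \<le> m" unfolding m_def using g by (intro integral_nonneg_AE) auto
  have m1: "m \<le> 1"
  proof -
    have "m \<le> (\<integral>x. 1 \<partial>M)" unfolding m_def using g
      by (intro integral_mono_AE) (auto intro!: bounded_integrable[OF M g(1), where B=1])
    then show ?thesis by (simp add: M.prob_space)
  qed
  define h where "h = (\<lambda>x. g x - m)"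
  have hm[measurable]: "h \<in> borel_measurable M" unfolding h_def using g(1) by measurable
  have hb: "\<bar>h x\<bar> \<le> 1" if "x \<in> space M" for x using g(2)[OF that] m0 m1 by (auto simp: h_def)
  have h0: "(\<integral>x. h x \<partial>M) = 0"
    unfolding h_def m_def using bounded_integrable[OF M g(1), where B=1] g(2)
    by (subst Bochner_Integration.integral_diff) (auto simp: M.prob_space)
  have hsq: "(\<integral>x. h x * h x \<partial>M) \<le> 1"
  proof -
    have "(\<integral>x. h x * h x \<partial>M) \<le> (\<integral>x. 1 \<partial>M)"
    proof (intro integral_mono_AE)
      show "integrable M (\<lambda>x. h x * h x)"
        using hm by (intro bounded_integrable[OF M, where B=1] borel_measurable_times abs_mult_le1 hb)
      show "AE x in M. h x * h x \<le> 1"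
      proof (rule AE_I2)
        fix x assume "x \<in> space M"
        then have "\<bar>h x * h x\<bar> \<le> 1" by (intro abs_mult_le1 hb)
        then show "h x * h x \<le> 1" by (simp add: abs_le_iff)
      qed
    qed simp
    then show ?thesis by (simp add: M.prob_space)
  qed
  have hPm: "(\<lambda>xs. h (xs i)) \<in> borel_measurable ?P" if "i < n" for i
    using that by (intro meas_comp_PiM) auto
  define Y where "Y = (\<lambda>xs. (\<Sum>i<n. h (xs i)) / real n)"
  have Ym: "Y \<in> borel_measurable ?P" unfolding Y_def using hPm by (intro borel_measurable_divide borel_measurable_sum) auto
  have Yb: "\<bar>Y xs\<bar> \<le> 1" if "xs \<in> space ?P" for xs
  proof -
    have "\<bar>\<Sum>i<n. h (xs i)\<bar> \<le> (\<Sum>i<n. \<bar>h (xs i)\<bar>)" by (rule sum_abs)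
    also have "\<dots> \<le> (\<Sum>i<n. 1)"
    proof (intro sum_mono hb)
      fix i assume "i \<in> {..<n}"
      then show "xs i \<in> space M" using that by (auto simp: space_PiM PiE_iff)
    qed
    finally have "\<bar>\<Sum>i<n. h (xs i)\<bar> \<le> real n" by simp
    then show ?thesis using n unfolding Y_def by (simp add: abs_divide divide_le_eq_1)
  qed
  have Yeq: "Y xs = (\<Sum>i<n. g (xs i)) / real n - m" for xs
    using n by (simp add: Y_def h_def sum_subtractf field_simps)
  have int_pair: "integrable ?P (\<lambda>xs. h (xs i) * h (xs l))" if "i < n" "l < n" for i l
  proof (intro bounded_integrable[OF P.prob_space_axioms, where B=1] borel_measurable_times hPm that)
    fix xs assume xs: "xs \<in> space ?P"
    have "xs i \<in> space M" "xs l \<in> space M" using xs that by (auto simp: space_PiM PiE_iff)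
    then show "\<bar>h (xs i) * h (xs l)\<bar> \<le> 1" by (intro abs_mult_le1 hb)
  qed
  have pair: "(\<integral>xs. h (xs i) * h (xs l) \<partial>?P) \<le> (if i = l then 1 else 0)" if "i < n" "l < n" for i l
  proof (cases "i = l")
    case True
    have "(\<integral>xs. h (xs i) * h (xs l) \<partial>?P) = (\<integral>xs. (\<lambda>x. h x * h x) (xs i) \<partial>?P)" using True by simp
    also have "\<dots> = (\<integral>x. h x * h x \<partial>M)"
      using that hm by (intro PiM_single[OF M, where B=1] borel_measurable_times abs_mult_le1 hb) auto
    finally show ?thesis using hsq True by simp
  next
    case False
    have "(\<integral>xs. h (xs i) * h (xs l) \<partial>?P) = (\<integral>x. h x \<partial>M) * (\<integral>x. h x \<partial>M)"
      using that False hb by (intro PiM_pair[OF M, where B=1 and B'=1]) auto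
    then show ?thesis using h0 False by simp
  qed
  have sq: "(\<integral>xs. (Y xs)\<^sup>2 \<partial>?P) \<le> 1 / real n"
  proof -
    have "(\<lambda>xs. (Y xs)\<^sup>2) = (\<lambda>xs. (\<Sum>i<n. \<Sum>l<n. h (xs i) * h (xs l)) / (real n)\<^sup>2)"
      by (auto simp: Y_def power2_eq_square sum_product)
    then have "(\<integral>xs. (Y xs)\<^sup>2 \<partial>?P) = (\<integral>xs. (\<Sum>i<n. \<Sum>l<n. h (xs i) * h (xs l)) \<partial>?P) / (real n)\<^sup>2"
      by simp
    also have "(\<integral>xs. (\<Sum>i<n. \<Sum>l<n. h (xs i) * h (xs l)) \<partial>?P) = (\<Sum>i<n. (\<integral>xs. (\<Sum>l<n. h (xs i) * h (xs l)) \<partial>?P))"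
      by (rule Bochner_Integration.integral_sum) (auto intro!: Bochner_Integration.integrable_sum int_pair)
    also have "\<dots> = (\<Sum>i<n. \<Sum>l<n. (\<integral>xs. h (xs i) * h (xs l) \<partial>?P))"
      by (intro sum.cong refl Bochner_Integration.integral_sum) (auto intro!: int_pair)
    also have "\<dots> \<le> (\<Sum>i<n. \<Sum>l<n. (if i = l then 1 else 0))"
      using pair by (intro sum_mono) auto
    also have "\<dots> = real n" by simp
    finally show ?thesis using n by (simp add: power2_eq_square divide_le_eq)
  qed
  have intY2: "integrable ?P (\<lambda>xs. (Y xs)\<^sup>2)"
  proof (intro bounded_integrable[OF P.prob_space_axioms, where B=1])
    show "(\<lambda>xs. (Y xs)\<^sup>2) \<in> borel_measurable ?P" using Ym by measurable
    fix xs assume "xs \<in> space ?P"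
    then have "\<bar>Y xs\<bar> \<le> 1" by (rule Yb)
    then have "\<bar>Y xs * Y xs\<bar> \<le> 1" by (intro abs_mult_le1)
    then show "\<bar>(Y xs)\<^sup>2\<bar> \<le> 1" by (simp add: power2_eq_square)
  qed
  have "(\<integral>xs. \<bar>(\<Sum>i<n. g (xs i)) / real n - (\<integral>x. g x \<partial>M)\<bar> \<partial>?P) = (\<integral>xs. \<bar>Y xs\<bar> \<partial>?P)"
    by (simp add: Yeq m_def)
  also have "\<dots> \<le> (\<integral>xs. e + (Y xs)\<^sup>2 / e \<partial>?P)"
  proof (intro integral_mono_AE)
    show "integrable ?P (\<lambda>xs. \<bar>Y xs\<bar>)" using Yb Ym by (intro bounded_integrable[OF P.prob_space_axioms, where B=1] borel_measurable_abs) auto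
    show "integrable ?P (\<lambda>xs. e + (Y xs)\<^sup>2 / e)" using intY2 by simp
    show "AE xs in ?P. \<bar>Y xs\<bar> \<le> e + (Y xs)\<^sup>2 / e"
    proof (intro AE_I2)
      fix xs
      have "0 \<le> (\<bar>Y xs\<bar> - e)\<^sup>2" by simp
      then have "2 * e * \<bar>Y xs\<bar> \<le> e * e + (Y xs)\<^sup>2" by (simp add: power2_eq_square algebra_simps)
      moreover have "0 \<le> e * \<bar>Y xs\<bar>" using e by simp
      ultimately have "e * \<bar>Y xs\<bar> \<le> e * e + (Y xs)\<^sup>2" by linarith
      then show "\<bar>Y xs\<bar> \<le> e + (Y xs)\<^sup>2 / e" using e by (simp add: field_simps)
    qed
  qed
  also have "\<dots> = e + (\<integral>xs. (Y xs)\<^sup>2 \<partial>?P) / e"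
    using intY2 by (simp add: P.prob_space)
  also have "\<dots> \<le> e + (1 / real n) / e"
    using sq e by (intro add_left_mono divide_right_mono) auto
  finally show ?thesis by simp
qed

lemma gen_bounds:
  fixes L :: real
  assumes L: "0 < L" "L \<le> 1/4"
  shows "0 \<le> (1 + L - L\<^sup>2) / (2 - L)" "(1 + L - L\<^sup>2) / (2 - L) \<le> 1"
    "0 \<le> L * (2 - L)\<^sup>2 / (1 + L - L\<^sup>2)" "L * (2 - L)\<^sup>2 / (1 + L - L\<^sup>2) \<le> 4 * L"
    "L * (2 - L)\<^sup>2 / (1 + L - L\<^sup>2) * ((1 + L - L\<^sup>2) / (2 - L)) = 2 * L - L\<^sup>2"
    "L * (2 - L)\<^sup>2 / (1 + L - L\<^sup>2) * ((1 + L - L\<^sup>2) / (2 - L) * ((1 + L - L\<^sup>2) / (2 - L))) = L + L\<^sup>2 - L ^ 3"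
proof -
  have q: "L\<^sup>2 \<le> L" using L by (simp add: power2_eq_square mult_le_cancel_right1)
  have D: "1 \<le> 1 + L - L\<^sup>2" using q by simp
  have E: "0 < 2 - L" using L by simp
  have num: "1 + L - L\<^sup>2 \<le> 2 - L"
  proof -
    have "0 \<le> (1 - L)\<^sup>2" by simp
    then show ?thesis by (simp add: power2_eq_square algebra_simps)
  qed
  show "0 \<le> (1 + L - L\<^sup>2) / (2 - L)" using D E by simp
  show "(1 + L - L\<^sup>2) / (2 - L) \<le> 1" using num E by simp
  show "0 \<le> L * (2 - L)\<^sup>2 / (1 + L - L\<^sup>2)" using D L by simp
  have sq: "(2 - L)\<^sup>2 \<le> 2\<^sup>2" using E L by (intro power_mono) auto
  have "L * (2 - L)\<^sup>2 / (1 + L - L\<^sup>2) \<le> L * (2 - L)\<^sup>2"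
  proof -
    have X0: "0 \<le> L * (2 - L)\<^sup>2" using L by simp
    then show ?thesis using D by (simp add: divide_le_eq mult_le_cancel_left1)
  qed
  also have "\<dots> \<le> L * 4" using sq L by (intro mult_left_mono) auto
  finally show "L * (2 - L)\<^sup>2 / (1 + L - L\<^sup>2) \<le> 4 * L" by simp
  have ab: "\<And>a b::real. a \<noteq> 0 \<Longrightarrow> b \<noteq> 0 \<Longrightarrow> L * b\<^sup>2 / a * (a / b) = L * b"
    by (simp add: power2_eq_square)
  have ab2: "\<And>a b::real. a \<noteq> 0 \<Longrightarrow> b \<noteq> 0 \<Longrightarrow> L * b\<^sup>2 / a * (a / b * (a / b)) = L * a"
    by (simp add: power2_eq_square)
  show "L * (2 - L)\<^sup>2 / (1 + L - L\<^sup>2) * ((1 + L - L\<^sup>2) / (2 - L)) = 2 * L - L\<^sup>2"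
    using D E ab[of "1 + L - L\<^sup>2" "2 - L"] by (simp add: power2_eq_square algebra_simps)
  show "L * (2 - L)\<^sup>2 / (1 + L - L\<^sup>2) * ((1 + L - L\<^sup>2) / (2 - L) * ((1 + L - L\<^sup>2) / (2 - L))) = L + L\<^sup>2 - L ^ 3"
    using D E ab2[of "1 + L - L\<^sup>2" "2 - L"] by (simp add: power2_eq_square power3_eq_cube algebra_simps)
qed

definition Lp :: "nat \<Rightarrow> real" where "Lp c = 1 / 2 ^ (c + 2)"
definition Mc :: "nat \<Rightarrow> nat" where "Mc c = (c + 1) * 2 ^ (c * (c + 2))"
definition xm :: "nat \<Rightarrow> real" where "xm c = (1 + Lp c - (Lp c)\<^sup>2) / (2 - Lp c)"
definition dm :: "nat \<Rightarrow> real" where "dm c = Lp c * (2 - Lp c)\<^sup>2 / (1 + Lp c - (Lp c)\<^sup>2)"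
definition rnu :: "idx \<Rightarrow> real" where
  "rnu t = (case t of IB \<Rightarrow> 1/2 | IY c \<Rightarrow> Lp c | IZ c k \<Rightarrow> Lp c)"
definition rmu :: "idx \<Rightarrow> real" where
  "rmu t = (case t of IB \<Rightarrow> 1/2 | IY c \<Rightarrow> dm c | IZ c k \<Rightarrow> xm c)"
definition cl :: "nat \<Rightarrow> nat" where "cl j = fst (prod_decode j)"
definition kk :: "nat \<Rightarrow> nat" where "kk j = snd (prod_decode j)"
definition Fnu :: "(idx \<Rightarrow> bool) \<Rightarrow> nat \<Rightarrow> bool" where
  "Fnu \<omega> j = (kk j < Mc (cl j) \<and> \<omega> IB \<and> (\<omega> (IY (cl j)) \<or> \<omega> (IZ (cl j) (kk j))))"
definition Fmu :: "(idx \<Rightarrow> bool) \<Rightarrow> nat \<Rightarrow> bool" where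
  "Fmu \<omega> j = (kk j < Mc (cl j) \<and> \<omega> IB \<and> \<omega> (IY (cl j)) \<and> \<omega> (IZ (cl j) (kk j)))"


lemma Lp_pos: "0 < Lp c" by (simp add: Lp_def)
lemma Lp_le: "Lp c \<le> 1/4"
proof -
  have "(1::real) \<le> 2 ^ c" by simp
  then have "(4::real) \<le> 2 ^ (c + 2)" by (simp add: power_add)
  then show ?thesis unfolding Lp_def by (simp add: divide_le_eq)
qed
lemma Lp_mono: "c \<le> c' \<Longrightarrow> Lp c' \<le> Lp c"
  unfolding Lp_def by (intro divide_left_mono power_increasing) auto
lemma Lp_Suc: "Lp (Suc c) = Lp c / 2"
  unfolding Lp_def by simp

lemma xm_bounds: "0 \<le> xm c \<and> xm c \<le> 1"
  using gen_bounds(1,2)[OF Lp_pos Lp_le] unfolding xm_def by simp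
lemma dm_bounds: "0 \<le> dm c \<and> dm c \<le> 4 * Lp c"
  using gen_bounds(3,4)[OF Lp_pos Lp_le] unfolding dm_def by simp
lemma dm_le1: "dm c \<le> 1" using dm_bounds[of c] Lp_le[of c] by simp
lemma dm_xm: "dm c * xm c = 2 * Lp c - (Lp c)\<^sup>2"
  using gen_bounds(5)[OF Lp_pos Lp_le] unfolding dm_def xm_def by simp
lemma dm_xm2: "dm c * (xm c * xm c) = Lp c + (Lp c)\<^sup>2 - (Lp c)^3"
  using gen_bounds(6)[OF Lp_pos Lp_le] unfolding dm_def xm_def by simp
lemma Lp_le1: "Lp c \<le> 1" using Lp_le[of c] by simp
lemma rnu_ok: "0 \<le> rnu t \<and> rnu t \<le> 1"
  using Lp_pos Lp_le1 by (cases t) (auto simp: rnu_def less_imp_le)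
lemma rmu_ok: "0 \<le> rmu t \<and> rmu t \<le> 1"
  using xm_bounds dm_bounds dm_le1 by (cases t) (auto simp: rmu_def)

lemma meas_F:
  assumes "\<And>j. (\<lambda>\<omega>. F \<omega> j) \<in> measurable (Om r) (count_space UNIV)"
  shows "F \<in> measurable (Om r) bitspace"
proof -
  have "(\<lambda>\<omega> j. F \<omega> j) \<in> measurable (Om r) bitspace"
    unfolding bitspace_def by (rule measurable_PiM_single') (use assms in auto)
  then show ?thesis by simp
qed

lemma Fnu_meas: "Fnu \<in> measurable (Om r) bitspace"
  by (rule meas_F) (unfold Fnu_def, measurable)
lemma Fmu_meas: "Fmu \<in> measurable (Om r) bitspace"
  by (rule meas_F) (unfold Fmu_def, measurable)

definition mon :: "idx set \<Rightarrow> idx set \<Rightarrow> (idx \<Rightarrow> bool) \<Rightarrow> real" where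
  "mon P Q \<omega> = (\<Prod>t\<in>P. of_bool (\<omega> t)) * (\<Prod>t\<in>Q. 1 - of_bool (\<omega> t))"

lemma meas_coord_real: "(\<lambda>\<omega>. f (\<omega> t) :: real) \<in> borel_measurable (Om r)"
  by (rule measurable_compose[OF meas_coord]) simp

lemma mon_meas: "mon P Q \<in> borel_measurable (Om r)"
  unfolding mon_def
  by (intro borel_measurable_times borel_measurable_prod meas_coord_real)

lemma mon_bound: "\<bar>mon P Q \<omega>\<bar> \<le> 1"
proof -
  have a: "0 \<le> (\<Prod>t\<in>P. of_bool (\<omega> t) :: real) \<and> (\<Prod>t\<in>P. of_bool (\<omega> t) :: real) \<le> 1"
    by (auto intro!: prod_nonneg prod_le_1)
  have b: "0 \<le> (\<Prod>t\<in>Q. 1 - of_bool (\<omega> t) :: real) \<and> (\<Prod>t\<in>Q. 1 - of_bool (\<omega> t) :: real) \<le> 1"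
    by (auto intro!: prod_nonneg prod_le_1)
  show ?thesis using a b unfolding mon_def by (simp add: abs_mult mult_le_one)
qed

lemma mon_int[simp]: "integrable (Om r) (mon P Q)"
  by (rule bounded_integrable[OF prob_space_Om mon_meas mon_bound])

lemma mon_E:
  assumes "finite P" "finite Q" "P \<inter> Q = {}" "\<And>t. 0 \<le> r t \<and> r t \<le> 1"
  shows "integral\<^sup>L (Om r) (mon P Q) = (\<Prod>t\<in>P. r t) * (\<Prod>t\<in>Q. 1 - r t)"
  unfolding mon_def using assms by (intro monoE) auto

definition G :: "nat \<Rightarrow> nat \<Rightarrow> real" where
  "G i j = (if kk i < Mc (cl i) \<and> kk j < Mc (cl j) then
    (if i = j then (2 * Lp (cl i) - (Lp (cl i))\<^sup>2) / 2
     else if cl i = cl j then (Lp (cl i) + (Lp (cl i))\<^sup>2 - (Lp (cl i))^3) / 2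
     else (2 * Lp (cl i) - (Lp (cl i))\<^sup>2) * (2 * Lp (cl j) - (Lp (cl j))\<^sup>2) / 2) else 0)"

lemma same_cl_kk: "i \<noteq> j \<Longrightarrow> cl i = cl j \<Longrightarrow> kk i \<noteq> kk j"
  unfolding cl_def kk_def by (metis prod.collapse prod_decode_inverse)

lemma gram_nu: "(\<integral>\<omega>. of_bool (Fnu \<omega> i) * of_bool (Fnu \<omega> j) \<partial>Om rnu) = G i j"
proof -
  define c where "c = cl i"
  define k where "k = kk i"
  define c' where "c' = cl j"
  define k' where "k' = kk j"
  note rok = rnu_ok
  show ?thesis
  proof (cases "kk i < Mc (cl i) \<and> kk j < Mc (cl j)")
    case False
    then have "(\<lambda>\<omega>. of_bool (Fnu \<omega> i) * of_bool (Fnu \<omega> j) :: real) = (\<lambda>_. 0)"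
      by (auto simp: Fnu_def)
    moreover have "G i j = 0" unfolding G_def using False by (rule if_not_P)
    ultimately show ?thesis by simp
  next
    case ab: True
    show ?thesis
    proof (cases "i = j")
      case True
      have "(\<lambda>\<omega>. of_bool (Fnu \<omega> i) * of_bool (Fnu \<omega> j) :: real) =
            (\<lambda>\<omega>. mon {IB} {} \<omega> - mon {IB} {IY c, IZ c k} \<omega>)"
      proof
        fix \<omega> show "(of_bool (Fnu \<omega> i) * of_bool (Fnu \<omega> j) :: real) = mon {IB} {} \<omega> - mon {IB} {IY c, IZ c k} \<omega>"
          using ab True unfolding c_def k_def
          by (cases "\<omega> IB"; cases "\<omega> (IY (cl i))"; cases "\<omega> (IZ (cl i) (kk i))") (simp_all add: mon_def Fnu_def)
      qed
      then have "(\<integral>\<omega>. of_bool (Fnu \<omega> i) * of_bool (Fnu \<omega> j) \<partial>Om rnu) = integral\<^sup>L (Om rnu) (mon {IB} {}) - integral\<^sup>L (Om rnu) (mon {IB} {IY c, IZ c k})"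
        by simp
      also have "\<dots> = 1/2 - 1/2 * ((1 - Lp c) * (1 - Lp c))"
        using rok by (simp add: mon_E rnu_def)
      finally show ?thesis using ab True by (simp add: G_def c_def power2_eq_square algebra_simps)
    next
      case ne: False
      show ?thesis
      proof (cases "cl i = cl j")
        case True
        have kne: "k \<noteq> k'" using same_cl_kk[OF ne True] by (simp add: k_def k'_def)
        have "(\<lambda>\<omega>. of_bool (Fnu \<omega> i) * of_bool (Fnu \<omega> j) :: real) =
              (\<lambda>\<omega>. mon {IB, IY c} {} \<omega> + mon {IB, IZ c k, IZ c k'} {IY c} \<omega>)"
        proof
          fix \<omega> show "(of_bool (Fnu \<omega> i) * of_bool (Fnu \<omega> j) :: real) = mon {IB, IY c} {} \<omega> + mon {IB, IZ c k, IZ c k'} {IY c} \<omega>"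
            using ab True kne unfolding c_def k_def k'_def
            by (cases "\<omega> IB"; cases "\<omega> (IY (cl i))"; cases "\<omega> (IZ (cl i) (kk i))"; cases "\<omega> (IZ (cl i) (kk j))") (simp_all add: mon_def Fnu_def)
        qed
        then have "(\<integral>\<omega>. of_bool (Fnu \<omega> i) * of_bool (Fnu \<omega> j) \<partial>Om rnu) = integral\<^sup>L (Om rnu) (mon {IB, IY c} {}) + integral\<^sup>L (Om rnu) (mon {IB, IZ c k, IZ c k'} {IY c})"
          by simp
        also have "\<dots> = 1/2 * Lp c + 1/2 * (Lp c * Lp c) * (1 - Lp c)"
          using rok kne by (simp add: mon_E rnu_def)
        finally show ?thesis using ab True ne by (simp add: G_def c_def power2_eq_square power3_eq_cube field_simps)
      next
        case cne: False
        have cne': "c \<noteq> c'" using cne by (simp add: c_def c'_def)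
        have "(\<lambda>\<omega>. of_bool (Fnu \<omega> i) * of_bool (Fnu \<omega> j) :: real) =
              (\<lambda>\<omega>. mon {IB} {} \<omega> - mon {IB} {IY c, IZ c k} \<omega> - mon {IB} {IY c', IZ c' k'} \<omega>
                   + mon {IB} {IY c, IZ c k, IY c', IZ c' k'} \<omega>)"
        proof
          fix \<omega> show "(of_bool (Fnu \<omega> i) * of_bool (Fnu \<omega> j) :: real) = mon {IB} {} \<omega> - mon {IB} {IY c, IZ c k} \<omega> - mon {IB} {IY c', IZ c' k'} \<omega>
                   + mon {IB} {IY c, IZ c k, IY c', IZ c' k'} \<omega>"
            using ab cne unfolding c_def k_def c'_def k'_def
            by (cases "\<omega> IB"; cases "\<omega> (IY (cl i))"; cases "\<omega> (IZ (cl i) (kk i))"; cases "\<omega> (IY (cl j))"; cases "\<omega> (IZ (cl j) (kk j))") (simp_all add: mon_def Fnu_def)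
        qed
        then have "(\<integral>\<omega>. of_bool (Fnu \<omega> i) * of_bool (Fnu \<omega> j) \<partial>Om rnu) = integral\<^sup>L (Om rnu) (mon {IB} {}) - integral\<^sup>L (Om rnu) (mon {IB} {IY c, IZ c k})
             - integral\<^sup>L (Om rnu) (mon {IB} {IY c', IZ c' k'}) + integral\<^sup>L (Om rnu) (mon {IB} {IY c, IZ c k, IY c', IZ c' k'})"
          by simp
        also have "\<dots> = 1/2 - 1/2 * ((1 - Lp c) * (1 - Lp c)) - 1/2 * ((1 - Lp c') * (1 - Lp c'))
             + 1/2 * ((1 - Lp c) * (1 - Lp c) * (1 - Lp c') * (1 - Lp c'))"
          using rok cne' by (simp add: mon_E rnu_def)
        finally show ?thesis using ab cne ne by (simp add: G_def c_def c'_def power2_eq_square algebra_simps)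
      qed
    qed
  qed
qed

lemma gram_mu: "(\<integral>\<omega>. of_bool (Fmu \<omega> i) * of_bool (Fmu \<omega> j) \<partial>Om rmu) = G i j"
proof -
  define c where "c = cl i"
  define k where "k = kk i"
  define c' where "c' = cl j"
  define k' where "k' = kk j"
  note rok = rmu_ok
  show ?thesis
  proof (cases "kk i < Mc (cl i) \<and> kk j < Mc (cl j)")
    case False
    then have "(\<lambda>\<omega>. of_bool (Fmu \<omega> i) * of_bool (Fmu \<omega> j) :: real) = (\<lambda>_. 0)"
      by (auto simp: Fmu_def)
    moreover have "G i j = 0" unfolding G_def using False by (rule if_not_P)
    ultimately show ?thesis by simp
  next
    case ab: True
    show ?thesis
    proof (cases "i = j")
      case True
      have "(\<lambda>\<omega>. of_bool (Fmu \<omega> i) * of_bool (Fmu \<omega> j) :: real) = mon {IB, IY c, IZ c k} {}"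
      proof
        fix \<omega> show "(of_bool (Fmu \<omega> i) * of_bool (Fmu \<omega> j) :: real) = mon {IB, IY c, IZ c k} {} \<omega>"
          using ab True unfolding c_def k_def
          by (cases "\<omega> IB"; cases "\<omega> (IY (cl i))"; cases "\<omega> (IZ (cl i) (kk i))") (simp_all add: mon_def Fmu_def)
      qed
      then have "(\<integral>\<omega>. of_bool (Fmu \<omega> i) * of_bool (Fmu \<omega> j) \<partial>Om rmu) = integral\<^sup>L (Om rmu) (mon {IB, IY c, IZ c k} {})"
        by simp
      also have "\<dots> = 1/2 * (dm c * xm c)"
        using rok by (simp add: mon_E rmu_def)
      finally show ?thesis using ab True by (simp add: G_def c_def dm_xm)
    next
      case ne: False
      show ?thesis
      proof (cases "cl i = cl j")
        case True
        have kne: "k \<noteq> k'" using same_cl_kk[OF ne True] by (simp add: k_def k'_def)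
        have "(\<lambda>\<omega>. of_bool (Fmu \<omega> i) * of_bool (Fmu \<omega> j) :: real) = mon {IB, IY c, IZ c k, IZ c k'} {}"
        proof
          fix \<omega> show "(of_bool (Fmu \<omega> i) * of_bool (Fmu \<omega> j) :: real) = mon {IB, IY c, IZ c k, IZ c k'} {} \<omega>"
            using ab True kne unfolding c_def k_def k'_def
            by (cases "\<omega> IB"; cases "\<omega> (IY (cl i))"; cases "\<omega> (IZ (cl i) (kk i))"; cases "\<omega> (IZ (cl i) (kk j))") (simp_all add: mon_def Fmu_def)
        qed
        then have "(\<integral>\<omega>. of_bool (Fmu \<omega> i) * of_bool (Fmu \<omega> j) \<partial>Om rmu) = integral\<^sup>L (Om rmu) (mon {IB, IY c, IZ c k, IZ c k'} {})"
          by simp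
        also have "\<dots> = 1/2 * (dm c * (xm c * xm c))"
          using rok kne by (simp add: mon_E rmu_def)
        finally show ?thesis using ab True ne by (simp add: G_def c_def dm_xm2)
      next
        case cne: False
        have cne': "c \<noteq> c'" using cne by (simp add: c_def c'_def)
        have "(\<lambda>\<omega>. of_bool (Fmu \<omega> i) * of_bool (Fmu \<omega> j) :: real) = mon {IB, IY c, IZ c k, IY c', IZ c' k'} {}"
        proof
          fix \<omega> show "(of_bool (Fmu \<omega> i) * of_bool (Fmu \<omega> j) :: real) = mon {IB, IY c, IZ c k, IY c', IZ c' k'} {} \<omega>"
            using ab cne unfolding c_def k_def c'_def k'_def
            by (cases "\<omega> IB"; cases "\<omega> (IY (cl i))"; cases "\<omega> (IZ (cl i) (kk i))"; cases "\<omega> (IY (cl j))"; cases "\<omega> (IZ (cl j) (kk j))") (simp_all add: mon_def Fmu_def)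
        qed
        then have "(\<integral>\<omega>. of_bool (Fmu \<omega> i) * of_bool (Fmu \<omega> j) \<partial>Om rmu) = integral\<^sup>L (Om rmu) (mon {IB, IY c, IZ c k, IY c', IZ c' k'} {})"
          by simp
        also have "\<dots> = 1/2 * (dm c * xm c) * (dm c' * xm c')"
          using rok cne' by (simp add: mon_E rmu_def)
        finally show ?thesis using ab cne ne by (simp add: G_def c_def c'_def dm_xm)
      qed
    qed
  qed
qed

lemma avg_bounds: "0 \<le> (\<Sum>i<n. of_bool (P i) :: real) / real n \<and> (\<Sum>i<n. of_bool (P i) :: real) / real n \<le> 1"
proof (cases "n = 0")
  case False
  have "(\<Sum>i<n. of_bool (P i) :: real) \<le> (\<Sum>i<n. 1)" by (intro sum_mono) auto
  then show ?thesis using False by (auto intro!: sum_nonneg simp: divide_le_eq_1)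
qed simp

lemma dev_bound:
  assumes "0 \<le> p \<and> p \<le> 1"
  shows "\<bar>(\<Sum>i<n. of_bool (P i) :: real) / real n - p\<bar> \<le> 1"
proof -
  have h: "\<And>a p::real. 0 \<le> a \<Longrightarrow> a \<le> 1 \<Longrightarrow> 0 \<le> p \<Longrightarrow> p \<le> 1 \<Longrightarrow> \<bar>a - p\<bar> \<le> 1" by auto
  show ?thesis using avg_bounds[of P n] assms by (intro h) auto
qed

lemma bit_meas: "sets N = sets bitspace \<Longrightarrow> (\<lambda>x. x j) \<in> measurable N (count_space UNIV)"
proof -
  assume a: "sets N = sets bitspace"
  have "(\<lambda>x. x j) \<in> measurable bitspace (count_space UNIV)"
    unfolding bitspace_def by (rule measurable_component_singleton) simp
  then show ?thesis by (subst measurable_cong_sets[OF a refl])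
qed

lemma bit_meas_real: "sets N = sets bitspace \<Longrightarrow> (\<lambda>x. f (x j) :: real) \<in> borel_measurable N"
  by (rule measurable_compose[OF bit_meas]) auto

definition Sf :: "nat \<Rightarrow> ((idx \<Rightarrow> bool) \<Rightarrow> nat \<Rightarrow> bool) \<Rightarrow> (nat \<Rightarrow> real) \<Rightarrow> (nat \<Rightarrow> idx \<Rightarrow> bool) \<Rightarrow> real" where
  "Sf n F p w = (SUP j. \<bar>(\<Sum>i<n. of_bool (F (w i) j)) / real n - p j\<bar>)"

lemma Delta_distr:
  assumes rok: "\<And>t. 0 \<le> r t \<and> r t \<le> 1" and F: "F \<in> measurable (Om r) bitspace"
  defines "\<nu> \<equiv> distr (Om r) bitspace F"
  shows "Delta n \<nu> = (\<integral>w. Sf n F (\<lambda>j. \<integral>x. of_bool (x j) \<partial>\<nu>) w \<partial>PiM {..<n} (\<lambda>_. Om r))"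
proof -
  define p where "p = (\<lambda>j. \<integral>x. of_bool (x j) \<partial>\<nu> :: real)"
  have p01: "0 \<le> p j \<and> p j \<le> 1" for j
  proof -
    interpret prob_space \<nu> unfolding \<nu>_def by (rule prob_space.prob_space_distr[OF prob_space_Om F])
    have m: "(\<lambda>x. of_bool (x j) :: real) \<in> borel_measurable \<nu>" by (rule bit_meas_real) (simp add: \<nu>_def)
    have "p j \<le> (\<integral>x. 1 \<partial>\<nu>)" unfolding p_def using m
      by (intro integral_mono_AE) (auto intro!: bounded_integrable[OF prob_space_axioms, where B=1])
    moreover have "0 \<le> p j" unfolding p_def by (intro integral_nonneg_AE) auto
    ultimately show ?thesis by (simp add: prob_space)
  qed
  have Pnu: "prob_space \<nu>" unfolding \<nu>_def by (rule prob_space.prob_space_distr[OF prob_space_Om F])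
  have snu: "sets \<nu> = sets bitspace" by (simp add: \<nu>_def)
  have F': "F \<in> measurable (Om r) \<nu>" using F by (simp add: measurable_cong_sets[OF refl snu])
  have eqd: "distr (Om r) \<nu> F = \<nu>" unfolding \<nu>_def by (rule distr_cong) auto
  have "PiM {..<n} (\<lambda>_. \<nu>) = PiM {..<n} (\<lambda>_. distr (Om r) \<nu> F)" by (simp add: eqd)
  also have "\<dots> = distr (PiM {..<n} (\<lambda>_. Om r)) (PiM {..<n} (\<lambda>_. \<nu>)) (compose {..<n} F)"
    by (rule distr_PiM_finite_prob_space'[symmetric]) (auto intro: prob_space_Om Pnu F')
  finally have eqP: "PiM {..<n} (\<lambda>_. \<nu>) = distr (PiM {..<n} (\<lambda>_. Om r)) (PiM {..<n} (\<lambda>_. \<nu>)) (compose {..<n} F)" .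
  define S where "S = (\<lambda>xs. (SUP j. \<bar>(\<Sum>i<n. of_bool (xs i j)) / real n - p j\<bar>))"
  have Sm: "S \<in> borel_measurable (PiM {..<n} (\<lambda>_. \<nu>))"
    unfolding S_def
  proof (rule borel_measurable_cSUP)
    fix j :: nat
    have "(\<lambda>xs. of_bool (xs i j) :: real) \<in> borel_measurable (PiM {..<n} (\<lambda>_. \<nu>))" if "i < n" for i
    proof (rule measurable_compose[of "\<lambda>xs. xs i" _ \<nu>])
      show "(\<lambda>xs. xs i) \<in> PiM {..<n} (\<lambda>_. \<nu>) \<rightarrow>\<^sub>M \<nu>" using that by (intro measurable_component_singleton) auto
      show "(\<lambda>x. of_bool (x j) :: real) \<in> borel_measurable \<nu>" by (rule bit_meas_real[OF snu])
    qed
    then show "(\<lambda>xs. \<bar>(\<Sum>i<n. of_bool (xs i j)) / real n - p j\<bar>) \<in> borel_measurable (PiM {..<n} (\<lambda>_. \<nu>))"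
      by (intro borel_measurable_abs borel_measurable_diff borel_measurable_divide borel_measurable_sum) auto
  next
    fix xs show "bdd_above (range (\<lambda>j. \<bar>(\<Sum>i<n. of_bool (xs i j)) / real n - p j\<bar>))"
      using dev_bound[OF p01] by (intro bdd_aboveI[where M=1]) auto
  qed simp
  have "Delta n \<nu> = (\<integral>xs. S xs \<partial>PiM {..<n} (\<lambda>_. \<nu>))"
    by (simp add: Delta_def S_def p_def)
  also have "\<dots> = (\<integral>w. S (compose {..<n} F w) \<partial>PiM {..<n} (\<lambda>_. Om r))"
  proof (subst eqP, rule integral_distr)
    show "compose {..<n} F \<in> PiM {..<n} (\<lambda>_. Om r) \<rightarrow>\<^sub>M PiM {..<n} (\<lambda>_. \<nu>)"
      unfolding compose_def
    proof (rule measurable_restrict)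
      fix i assume i: "i \<in> {..<n}"
      show "(\<lambda>w. F (w i)) \<in> PiM {..<n} (\<lambda>_. Om r) \<rightarrow>\<^sub>M \<nu>"
      proof (rule measurable_compose[of "\<lambda>w. w i" _ "Om r"])
        show "(\<lambda>w. w i) \<in> PiM {..<n} (\<lambda>_. Om r) \<rightarrow>\<^sub>M Om r" using i by (intro measurable_component_singleton) auto
      qed (rule F')
    qed
    show "S \<in> borel_measurable (PiM {..<n} (\<lambda>_. \<nu>))" by (rule Sm)
  qed
  also have "\<dots> = (\<integral>w. Sf n F p w \<partial>PiM {..<n} (\<lambda>_. Om r))"
  proof (intro Bochner_Integration.integral_cong refl)
    fix w
    have "(\<Sum>i<n. of_bool (compose {..<n} F w i j) :: real) = (\<Sum>i<n. of_bool (F (w i) j))" for j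
      by (intro sum.cong refl) (simp add: compose_def)
    then show "S (compose {..<n} F w) = Sf n F p w" unfolding S_def Sf_def by presburger
  qed
  finally show ?thesis by (simp add: p_def)
qed

lemma Sf_ge:
  assumes p: "\<And>j. 0 \<le> p j \<and> p j \<le> 1"
  shows "\<bar>(\<Sum>i<n. of_bool (F (w i) j)) / real n - p j\<bar> \<le> Sf n F p w"
  unfolding Sf_def
  by (rule cSUP_upper) (use dev_bound[OF p] in \<open>auto intro!: bdd_aboveI[where M=1]\<close>)

lemma Sf_le:
  assumes "\<And>j. \<bar>(\<Sum>i<n. of_bool (F (w i) j)) / real n - p j\<bar> \<le> B"
  shows "Sf n F p w \<le> B"
  unfolding Sf_def by (rule cSUP_least) (use assms in auto)

lemma Sf_nonneg:
  assumes p: "\<And>j. 0 \<le> p j \<and> p j \<le> 1"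
  shows "0 \<le> Sf n F p w"
  using Sf_ge[where p=p and n=n and F=F and w=w and j=0, OF p] by linarith

lemma Sf_le1:
  assumes p: "\<And>j. 0 \<le> p j \<and> p j \<le> 1"
  shows "Sf n F p w \<le> 1"
  by (rule Sf_le) (rule dev_bound[OF p])

lemma meas_PiOm: "i < n \<Longrightarrow> (\<lambda>w. f (w i t) :: real) \<in> borel_measurable (PiM {..<n} (\<lambda>_. Om r))"
  by (rule meas_comp_PiM[of i "{..<n}" "\<lambda>\<omega>. f (\<omega> t)"]) (auto intro: meas_coord_real)

lemma Sf_meas:
  assumes p: "\<And>j. 0 \<le> p j \<and> p j \<le> 1" and F: "\<And>j. (\<lambda>\<omega>. F \<omega> j) \<in> measurable (Om r) (count_space UNIV)"
  shows "Sf n F p \<in> borel_measurable (PiM {..<n} (\<lambda>_. Om r))"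
  unfolding Sf_def
proof (rule borel_measurable_cSUP)
  fix j :: nat
  have "(\<lambda>w. of_bool (F (w i) j) :: real) \<in> borel_measurable (PiM {..<n} (\<lambda>_. Om r))" if "i < n" for i
  proof (rule measurable_compose[of "\<lambda>w. w i" _ "Om r"])
    show "(\<lambda>w. w i) \<in> PiM {..<n} (\<lambda>_. Om r) \<rightarrow>\<^sub>M Om r" using that by (intro measurable_component_singleton) auto
    show "(\<lambda>\<omega>. of_bool (F \<omega> j) :: real) \<in> borel_measurable (Om r)"
      by (rule measurable_compose[OF F]) simp
  qed
  then show "(\<lambda>w. \<bar>(\<Sum>i<n. of_bool (F (w i) j)) / real n - p j\<bar>) \<in> borel_measurable (PiM {..<n} (\<lambda>_. Om r))"
    by (intro borel_measurable_abs borel_measurable_diff borel_measurable_divide borel_measurable_sum) auto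
next
  fix w show "bdd_above (range (\<lambda>j. \<bar>(\<Sum>i<n. of_bool (F (w i) j)) / real n - p j\<bar>))"
    using dev_bound[OF p] by (intro bdd_aboveI[where M=1]) auto
qed simp

lemma Sf_int:
  assumes p: "\<And>j. 0 \<le> p j \<and> p j \<le> 1" and F: "\<And>j. (\<lambda>\<omega>. F \<omega> j) \<in> measurable (Om r) (count_space UNIV)"
  shows "integrable (PiM {..<n} (\<lambda>_. Om r)) (Sf n F p)"
proof -
  interpret product_prob_space "\<lambda>_. Om r" "{..<n}" by (rule product_prob_spaceI) (rule prob_space_Om)
  show ?thesis
    by (rule bounded_integrable[OF P.prob_space_axioms Sf_meas[OF p F], where B=1])
       (use Sf_nonneg[OF p] Sf_le1[OF p] in \<open>auto simp: abs_le_iff\<close>)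
qed

definition nu :: "(nat \<Rightarrow> bool) measure" where "nu = distr (Om rnu) bitspace Fnu"
definition mu :: "(nat \<Rightarrow> bool) measure" where "mu = distr (Om rmu) bitspace Fmu"

lemma Fnu_j: "(\<lambda>\<omega>. Fnu \<omega> j) \<in> measurable (Om r) (count_space UNIV)"
  unfolding Fnu_def by measurable
lemma Fmu_j: "(\<lambda>\<omega>. Fmu \<omega> j) \<in> measurable (Om r) (count_space UNIV)"
  unfolding Fmu_def by measurable

lemma int_bit_distr:
  fixes f :: "_ \<Rightarrow> real"
  assumes F: "F \<in> measurable (Om r) bitspace" and f: "f \<in> borel_measurable bitspace"
  shows "(\<integral>x. f x \<partial>distr (Om r) bitspace F) = (\<integral>\<omega>. f (F \<omega>) \<partial>Om r)"
  by (rule integral_distr[OF F f])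

lemma gram_nu': "(\<integral>x. of_bool (x i) * of_bool (x j) \<partial>nu) = G i j"
proof -
  have "(\<lambda>x. of_bool (x i) * of_bool (x j) :: real) \<in> borel_measurable bitspace"
    by (intro borel_measurable_times bit_meas_real) auto
  then show ?thesis unfolding nu_def by (simp add: int_bit_distr[OF Fnu_meas] gram_nu)
qed

lemma gram_mu': "(\<integral>x. of_bool (x i) * of_bool (x j) \<partial>mu) = G i j"
proof -
  have "(\<lambda>x. of_bool (x i) * of_bool (x j) :: real) \<in> borel_measurable bitspace"
    by (intro borel_measurable_times bit_meas_real) auto
  then show ?thesis unfolding mu_def by (simp add: int_bit_distr[OF Fmu_meas] gram_mu)
qed

lemma ob_sq: "(\<lambda>x. of_bool (x j) * of_bool (x j) :: real) = (\<lambda>x. of_bool (x j))"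
  by auto
lemma mean_nu: "(\<integral>x. of_bool (x j) \<partial>nu) = G j j"
  using gram_nu'[of j j] by (simp only: ob_sq)
lemma mean_mu: "(\<integral>x. of_bool (x j) \<partial>mu) = G j j"
  using gram_mu'[of j j] by (simp only: ob_sq)

lemma Gjj: "G j j = (if kk j < Mc (cl j) then (2 * Lp (cl j) - (Lp (cl j))\<^sup>2) / 2 else 0)"
  by (simp add: G_def)

lemma Gjj_bounds: "0 \<le> G j j \<and> G j j \<le> Lp (cl j)"
proof -
  have "0 < Lp (cl j)" "Lp (cl j) \<le> 1" using Lp_pos Lp_le1 .
  moreover have "(Lp (cl j))\<^sup>2 \<le> Lp (cl j)" using calculation by (simp add: power2_eq_square mult_le_cancel_right1)
  ultimately show ?thesis by (auto simp: Gjj power2_eq_square)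
qed

lemma Gjj_01: "0 \<le> G j j \<and> G j j \<le> 1"
  using Gjj_bounds[of j] Lp_le1[of "cl j"] by auto

lemma Delta_nu: "Delta n nu = (\<integral>w. Sf n Fnu (\<lambda>j. G j j) w \<partial>PiM {..<n} (\<lambda>_. Om rnu))"
  using Delta_distr[where r=rnu and F=Fnu and n=n, OF rnu_ok Fnu_meas] by (simp add: nu_def[symmetric] mean_nu)
lemma Delta_mu: "Delta n mu = (\<integral>w. Sf n Fmu (\<lambda>j. G j j) w \<partial>PiM {..<n} (\<lambda>_. Om rmu))"
  using Delta_distr[where r=rmu and F=Fmu and n=n, OF rmu_ok Fmu_meas] by (simp add: mu_def[symmetric] mean_mu)

lemma E_coord: "(\<And>t. 0 \<le> r t \<and> r t \<le> 1) \<Longrightarrow> (\<integral>\<omega>. of_bool (\<omega> t) \<partial>Om r) = r t"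
  using prodE[of "{t}" r "\<lambda>_ v. of_bool v"] by simp

lemma E_coord2: "(\<And>t. 0 \<le> r t \<and> r t \<le> 1) \<Longrightarrow> t \<noteq> t' \<Longrightarrow>
    (\<integral>\<omega>. of_bool (\<omega> t) * of_bool (\<omega> t') \<partial>Om r) = r t * r t'"
  using prodE[of "{t, t'}" r "\<lambda>_ v. of_bool v"] by simp

lemma McLp: "real (Mc n) * Lp n ^ n = real n + 1"
proof -
  have "Lp n ^ n = 1 / 2 ^ ((n + 2) * n)" unfolding Lp_def power_one_over power_mult ..
  moreover have "real (Mc n) = (real n + 1) * 2 ^ ((n + 2) * n)" unfolding Mc_def by (simp add: mult.commute algebra_simps)
  ultimately show ?thesis by simp
qed

lemma shatter:
  assumes n: "n > 0"
  shows "(\<integral>w. of_bool (\<not> (\<exists>k<Mc n. \<forall>i<n. w i (IZ n k))) \<partial>PiM {..<n} (\<lambda>_. Om rnu)) \<le> 1 / (real n + 1)"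
proof -
  interpret product_prob_space "\<lambda>_. Om rnu" "{..<n}" by (rule product_prob_spaceI) (rule prob_space_Om)
  let ?P = "PiM {..<n} (\<lambda>_. Om rnu)"
  define M where "M = Mc n"
  define L where "L = Lp n"
  define A where "A = real M * L ^ n"
  have A: "A = real n + 1" unfolding A_def M_def L_def by (rule McLp)
  have Apos: "A > 0" using A by simp
  define h where "h = (\<lambda>k (\<omega>::idx \<Rightarrow> bool). of_bool (\<omega> (IZ n k)) :: real)"
  define N where "N = (\<lambda>w. \<Sum>k<M. \<Prod>i<n. h k (w i))"
  have hm: "h k \<in> borel_measurable (Om rnu)" for k unfolding h_def by (rule meas_coord_real)
  have hb: "\<bar>h k \<omega>\<bar> \<le> 1" for k \<omega> unfolding h_def by simp
  have hhm: "(\<lambda>\<omega>. h k \<omega> * h l \<omega>) \<in> borel_measurable (Om rnu)" for k l using hm by (intro borel_measurable_times)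
  have hhb: "\<bar>h k \<omega> * h l \<omega>\<bar> \<le> 1" for k l \<omega> unfolding h_def by simp
  have Eh: "(\<integral>\<omega>. h k \<omega> \<partial>Om rnu) = L" for k unfolding h_def L_def
    using E_coord[where r=rnu and t="IZ n k", OF rnu_ok] by (simp add: rnu_def)
  have Ehh: "(\<integral>\<omega>. h k \<omega> * h l \<omega> \<partial>Om rnu) = (if k = l then L else L * L)" for k l
  proof (cases "k = l")
    case True
    have "(\<lambda>\<omega>. h k \<omega> * h l \<omega>) = h k" using True by (auto simp: h_def)
    then show ?thesis using Eh[of k] True by simp
  next
    case False then show ?thesis unfolding h_def L_def
      using E_coord2[where r=rnu and t="IZ n k" and t'="IZ n l", OF rnu_ok] by (simp add: rnu_def)
  qed
  have prodm: "(\<lambda>w. \<Prod>i<n. g (w i)) \<in> borel_measurable ?P" if "g \<in> borel_measurable (Om rnu)" for g :: "_ \<Rightarrow> real"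
    using that by (intro borel_measurable_prod meas_comp_PiM) auto
  have prodb: "\<bar>\<Prod>i<n. g (w i)\<bar> \<le> 1" if "\<And>\<omega>. \<bar>g \<omega>\<bar> \<le> 1" for g :: "_ \<Rightarrow> real" and w
    using that by (simp add: abs_prod prod_le_1)
  have prodi: "integrable ?P (\<lambda>w. \<Prod>i<n. g (w i))" if "g \<in> borel_measurable (Om rnu)" "\<And>\<omega>. \<bar>g \<omega>\<bar> \<le> 1" for g :: "_ \<Rightarrow> real"
    using that by (intro bounded_integrable[OF P.prob_space_axioms prodm, where B=1] prodb) auto
  have Eprod: "(\<integral>w. (\<Prod>i<n. g (w i)) \<partial>?P) = (\<integral>\<omega>. g \<omega> \<partial>Om rnu) ^ n" if "g \<in> borel_measurable (Om rnu)" "\<And>\<omega>. \<bar>g \<omega>\<bar> \<le> 1" for g :: "_ \<Rightarrow> real"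
    using PiM_power[where M="Om rnu" and I="{..<n}" and h=g and B=1, OF prob_space_Om] that by simp
  have Nm: "N \<in> borel_measurable ?P" unfolding N_def using hm by (intro borel_measurable_sum prodm) auto
  have Ni: "integrable ?P N" unfolding N_def using hm hb by (intro Bochner_Integration.integrable_sum prodi) auto
  have EN: "(\<integral>w. N w \<partial>?P) = A"
  proof -
    have "(\<integral>w. N w \<partial>?P) = (\<Sum>k<M. (\<integral>w. (\<Prod>i<n. h k (w i)) \<partial>?P))"
      unfolding N_def using hm hb by (intro Bochner_Integration.integral_sum prodi) auto
    also have "\<dots> = (\<Sum>k<M. L ^ n)" using hm hb by (intro sum.cong refl) (simp add: Eprod Eh)
    finally show ?thesis by (simp add: A_def)
  qed
  have N2: "(N w)\<^sup>2 = (\<Sum>k<M. \<Sum>l<M. \<Prod>i<n. h k (w i) * h l (w i))" for w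
    unfolding N_def power2_eq_square sum_product by (simp add: prod.distrib)
  have N2i: "integrable ?P (\<lambda>w. (N w)\<^sup>2)" unfolding N2 using hhm hhb
    by (intro Bochner_Integration.integrable_sum prodi) auto
  have Ekl: "(\<integral>w. (\<Prod>i<n. h k (w i) * h l (w i)) \<partial>?P) = (if k = l then L else L * L) ^ n" for k l
    using Eprod[of "\<lambda>\<omega>. h k \<omega> * h l \<omega>"] hhm hhb Ehh by simp
  have EN2: "(\<integral>w. (N w)\<^sup>2 \<partial>?P) \<le> A + A * A"
  proof -
    have "(\<integral>w. (N w)\<^sup>2 \<partial>?P) = (\<Sum>k<M. \<Sum>l<M. (\<integral>w. (\<Prod>i<n. h k (w i) * h l (w i)) \<partial>?P))"
      unfolding N2 using hhm hhb
      by (subst Bochner_Integration.integral_sum, force intro!: Bochner_Integration.integrable_sum prodi)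
         (intro sum.cong refl Bochner_Integration.integral_sum prodi, auto)
    also have "\<dots> = (\<Sum>k<M. \<Sum>l<M. (if k = l then L else L * L) ^ n)"
      by (intro sum.cong refl) (rule Ekl)
    also have "\<dots> \<le> (\<Sum>k<M. \<Sum>l<M. (if k = l then L ^ n else 0) + L ^ n * L ^ n)"
      using Lp_pos[of n] by (intro sum_mono) (auto simp: L_def power_mult_distrib)
    also have "\<dots> = real M * L ^ n + real M * real M * (L ^ n * L ^ n)"
      by (simp add: sum.distrib sum.delta algebra_simps)
    finally show ?thesis by (simp add: A_def algebra_simps)
  qed
  have Evar: "(\<integral>w. (N w - A)\<^sup>2 \<partial>?P) \<le> A"
  proof -
    have eq: "(\<lambda>w. (N w - A)\<^sup>2) = (\<lambda>w. (N w)\<^sup>2 - 2 * A * N w + A * A)"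
      by (auto simp: power2_eq_square algebra_simps)
    have "(\<integral>w. (N w - A)\<^sup>2 \<partial>?P) = (\<integral>w. (N w)\<^sup>2 \<partial>?P) - 2 * A * (\<integral>w. N w \<partial>?P) + A * A"
      unfolding eq using N2i Ni by (simp add: P.prob_space)
    then show ?thesis using EN2 EN by simp
  qed
  have pt: "of_bool (\<not> (\<exists>k<Mc n. \<forall>i<n. w i (IZ n k))) \<le> (N w - A)\<^sup>2 / (A * A)" for w
  proof (cases "\<exists>k<Mc n. \<forall>i<n. w i (IZ n k)")
    case False
    then have "N w = 0" unfolding N_def M_def h_def
      by (intro sum.neutral ballI) (auto simp: prod_zero_iff)
    then show ?thesis using False Apos by (simp add: power2_eq_square)
  qed simp
  have "(\<integral>w. of_bool (\<not> (\<exists>k<Mc n. \<forall>i<n. w i (IZ n k))) \<partial>?P) \<le> (\<integral>w. (N w - A)\<^sup>2 / (A * A) \<partial>?P)"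
  proof (intro integral_mono_AE AE_I2 pt)
    have "(\<lambda>w. (N w - A)\<^sup>2) = (\<lambda>w. (N w)\<^sup>2 - 2 * A * N w + A * A)"
      by (auto simp: power2_eq_square algebra_simps)
    then show "integrable ?P (\<lambda>w. (N w - A)\<^sup>2 / (A * A))" using N2i Ni by simp
    have "{w \<in> space ?P. \<exists>k<Mc n. \<forall>i<n. w i (IZ n k)} \<in> sets ?P"
    proof -
      have "{w \<in> space ?P. \<exists>k<Mc n. \<forall>i<n. w i (IZ n k)} = space ?P \<inter> (\<Union>k<Mc n. \<Inter>i<n. {w \<in> space ?P. w i (IZ n k)})"
        using n by auto
      also have "\<dots> \<in> sets ?P"
      proof (intro sets.Int sets.top sets.finite_UN sets.finite_INT ballI finite_lessThan)
        fix k i assume "i \<in> {..<n}"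
        have "(\<lambda>w. w i (IZ n k)) \<in> measurable ?P (count_space UNIV)"
        proof (rule measurable_compose[of "\<lambda>w. w i" _ "Om rnu"])
          show "(\<lambda>w. w i) \<in> ?P \<rightarrow>\<^sub>M Om rnu" using \<open>i \<in> {..<n}\<close> by (intro measurable_component_singleton) auto
        qed (rule meas_coord)
        then show "{w \<in> space ?P. w i (IZ n k)} \<in> sets ?P" by measurable
      qed (use n in auto)
      finally show ?thesis .
    qed
    then have "(\<lambda>w. \<exists>k<Mc n. \<forall>i<n. w i (IZ n k)) \<in> measurable ?P (count_space UNIV)" by (rule pred_def[THEN iffD2])
    then have "(\<lambda>w. \<not> (\<exists>k<Mc n. \<forall>i<n. w i (IZ n k))) \<in> measurable ?P (count_space UNIV)" by (rule pred_intros_logic)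
    then have "(\<lambda>w. of_bool (\<not> (\<exists>k<Mc n. \<forall>i<n. w i (IZ n k))) :: real) \<in> borel_measurable ?P"
      by (rule measurable_compose) simp
    then show "integrable ?P (\<lambda>w. of_bool (\<not> (\<exists>k<Mc n. \<forall>i<n. w i (IZ n k))) :: real)"
      by (intro bounded_integrable[OF P.prob_space_axioms, where B=1]) auto
  qed
  also have "\<dots> = (\<integral>w. (N w - A)\<^sup>2 \<partial>?P) / (A * A)" by simp
  also have "\<dots> \<le> A / (A * A)" using Evar Apos by (intro divide_right_mono) auto
  also have "\<dots> = 1 / (real n + 1)" using Apos A by simp
  finally show ?thesis .
qed

lemma cl_enc[simp]: "cl (prod_encode (c, k)) = c" by (simp add: cl_def)
lemma kk_enc[simp]: "kk (prod_encode (c, k)) = k" by (simp add: kk_def)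
lemma enc_clkk: "prod_encode (cl j, kk j) = j" by (simp add: cl_def kk_def)

lemma Om_coord_pred: "i < n \<Longrightarrow> (\<lambda>w. w i t) \<in> measurable (PiM {..<n} (\<lambda>_. Om r)) (count_space UNIV)"
proof (rule measurable_compose[of "\<lambda>w. w i" _ "Om r"])
  assume "i < n"
  then show "(\<lambda>w. w i) \<in> PiM {..<n} (\<lambda>_. Om r) \<rightarrow>\<^sub>M Om r" by (intro measurable_component_singleton) auto
qed (rule meas_coord)

lemma avg_int:
  assumes "\<And>i. i < n \<Longrightarrow> (\<lambda>w. P w i) \<in> measurable (PiM {..<n} (\<lambda>_. Om r)) (count_space UNIV)"
  shows "integrable (PiM {..<n} (\<lambda>_. Om r)) (\<lambda>w. (\<Sum>i<n. of_bool (P w i) :: real) / real n)"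
proof -
  interpret product_prob_space "\<lambda>_. Om r" "{..<n}" by (rule product_prob_spaceI) (rule prob_space_Om)
  have "(\<lambda>w. of_bool (P w i) :: real) \<in> borel_measurable (PiM {..<n} (\<lambda>_. Om r))" if "i < n" for i
    by (rule measurable_compose[OF assms[OF that]]) simp
  then have m: "(\<lambda>w. (\<Sum>i<n. of_bool (P w i) :: real) / real n) \<in> borel_measurable (PiM {..<n} (\<lambda>_. Om r))"
    by (intro borel_measurable_divide borel_measurable_sum) auto
  show ?thesis
    by (rule bounded_integrable[OF P.prob_space_axioms m, where B=1]) (use avg_bounds in auto)
qed

lemma E_avg_coord:
  assumes rok: "\<And>t. 0 \<le> r t \<and> r t \<le> 1" and n: "n > 0"
  shows "(\<integral>w. (\<Sum>i<n. of_bool (w i t) :: real) / real n \<partial>PiM {..<n} (\<lambda>_. Om r)) = r t"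
proof -
  interpret product_prob_space "\<lambda>_. Om r" "{..<n}" by (rule product_prob_spaceI) (rule prob_space_Om)
  have "(\<integral>w. (\<Sum>i<n. of_bool (w i t) :: real) \<partial>PiM {..<n} (\<lambda>_. Om r)) = (\<Sum>i<n. \<integral>w. of_bool (w i t) \<partial>PiM {..<n} (\<lambda>_. Om r))"
    by (rule Bochner_Integration.integral_sum)
       (auto intro!: bounded_integrable[OF P.prob_space_axioms, where B=1] meas_PiOm)
  also have "\<dots> = (\<Sum>i<n. r t)"
  proof (intro sum.cong refl)
    fix i assume "i \<in> {..<n}"
    then have "(\<integral>w. (\<lambda>\<omega>. of_bool (\<omega> t) :: real) (w i) \<partial>PiM {..<n} (\<lambda>_. Om r)) = (\<integral>\<omega>. of_bool (\<omega> t) \<partial>Om r)"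
      by (intro PiM_single[OF prob_space_Om, where B=1] meas_coord_real) auto
    then show "(\<integral>w. of_bool (w i t) \<partial>PiM {..<n} (\<lambda>_. Om r)) = r t" using E_coord[where r=r and t=t, OF rok] by simp
  qed
  finally show ?thesis using n by simp
qed

lemma notGd_int: "integrable (PiM {..<n} (\<lambda>_. Om r)) (\<lambda>w. of_bool (\<not> (\<exists>k<Mc n. \<forall>i<n. w i (IZ n k))) :: real)"
proof -
  interpret product_prob_space "\<lambda>_. Om r" "{..<n}" by (rule product_prob_spaceI) (rule prob_space_Om)
  let ?P = "PiM {..<n} (\<lambda>_. Om r)"
  have "{w \<in> space ?P. \<exists>k<Mc n. \<forall>i<n. w i (IZ n k)} \<in> sets ?P"
  proof (cases "n = 0")
    case True
    then show ?thesis by (cases "Mc n = 0") (auto simp: Mc_def)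
  next
    case False
    then have "{w \<in> space ?P. \<exists>k<Mc n. \<forall>i<n. w i (IZ n k)} = space ?P \<inter> (\<Union>k<Mc n. \<Inter>i<n. {w \<in> space ?P. w i (IZ n k)})"
      by auto
    also have "\<dots> \<in> sets ?P"
    proof (intro sets.Int sets.top sets.finite_UN sets.finite_INT ballI finite_lessThan)
      fix k i assume "i \<in> {..<n}"
      then have "(\<lambda>w. w i (IZ n k)) \<in> measurable ?P (count_space UNIV)" by (intro Om_coord_pred) auto
      then show "{w \<in> space ?P. w i (IZ n k)} \<in> sets ?P" by measurable
    qed (use False in auto)
    finally show ?thesis .
  qed
  then have "(\<lambda>w. \<exists>k<Mc n. \<forall>i<n. w i (IZ n k)) \<in> measurable ?P (count_space UNIV)" by (rule pred_def[THEN iffD2])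
  then have "(\<lambda>w. \<not> (\<exists>k<Mc n. \<forall>i<n. w i (IZ n k))) \<in> measurable ?P (count_space UNIV)" by (rule pred_intros_logic)
  then have "(\<lambda>w. of_bool (\<not> (\<exists>k<Mc n. \<forall>i<n. w i (IZ n k))) :: real) \<in> borel_measurable ?P"
    by (rule measurable_compose) simp
  then show ?thesis by (intro bounded_integrable[OF P.prob_space_axioms, where B=1]) auto
qed

lemma nu_lower:
  assumes n: "n > 0"
  shows "1/2 - Lp n - 1 / (real n + 1) \<le> Delta n nu"
proof -
  interpret product_prob_space "\<lambda>_. Om rnu" "{..<n}" by (rule product_prob_spaceI) (rule prob_space_Om)
  let ?P = "PiM {..<n} (\<lambda>_. Om rnu)"
  define \<beta> where "\<beta> = (\<lambda>w. (\<Sum>i<n. of_bool (w i IB) :: real) / real n)"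
  define Gd where "Gd = (\<lambda>w. \<exists>k<Mc n. \<forall>i<n. w i (IZ n k))"
  have gok: "\<And>j. 0 \<le> G j j \<and> G j j \<le> 1" by (rule Gjj_01)
  have pt: "\<beta> w - Lp n - of_bool (\<not> Gd w) \<le> Sf n Fnu (\<lambda>j. G j j) w" for w
  proof (cases "Gd w")
    case True
    then obtain k where k: "k < Mc n" "\<forall>i<n. w i (IZ n k)" unfolding Gd_def by blast
    define j where "j = prod_encode (n, k)"
    have "(\<Sum>i<n. of_bool (Fnu (w i) j) :: real) = (\<Sum>i<n. of_bool (w i IB))"
      using k by (intro sum.cong refl) (auto simp: Fnu_def j_def)
    then have "\<bar>\<beta> w - G j j\<bar> \<le> Sf n Fnu (\<lambda>j. G j j) w"
      using Sf_ge[where p="\<lambda>j. G j j" and n=n and F=Fnu and w=w and j=j, OF gok] by (simp add: \<beta>_def)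
    moreover have "G j j \<le> Lp n" using Gjj_bounds[of j] by (simp add: j_def)
    ultimately show ?thesis using True by simp
  next
    case False
    have "\<beta> w \<le> 1" using avg_bounds[of "\<lambda>i. w i IB" n] unfolding \<beta>_def by simp
    then show ?thesis using False Sf_nonneg[where p="\<lambda>j. G j j" and n=n and F=Fnu and w=w, OF gok] Lp_pos[of n] by simp
  qed
  have bi: "integrable ?P \<beta>" unfolding \<beta>_def by (rule avg_int) (rule Om_coord_pred)
  have gi: "integrable ?P (\<lambda>w. of_bool (\<not> Gd w) :: real)" unfolding Gd_def by (rule notGd_int)
  have "(\<integral>w. \<beta> w - Lp n - of_bool (\<not> Gd w) \<partial>?P) \<le> (\<integral>w. Sf n Fnu (\<lambda>j. G j j) w \<partial>?P)"
    using bi gi pt by (intro integral_mono Sf_int[OF gok Fnu_j]) auto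
  moreover have "(\<integral>w. \<beta> w - Lp n - of_bool (\<not> Gd w) \<partial>?P) = (\<integral>w. \<beta> w \<partial>?P) - Lp n - (\<integral>w. of_bool (\<not> Gd w) \<partial>?P)"
    using bi gi by (simp add: P.prob_space)
  moreover have "(\<integral>w. \<beta> w \<partial>?P) = 1/2"
    unfolding \<beta>_def using E_avg_coord[where r=rnu and t=IB, OF rnu_ok n] by (simp add: rnu_def)
  moreover have "(\<integral>w. of_bool (\<not> Gd w) \<partial>?P) \<le> 1 / (real n + 1)"
    unfolding Gd_def by (rule shatter[OF n])
  ultimately show ?thesis by (simp add: Delta_nu)
qed

lemma nu_upper:
  assumes n: "n > 0" and e: "e > 0"
  shows "Delta n nu \<le> 1/2 + (e + 1 / (real n * e))"
proof -
  interpret product_prob_space "\<lambda>_. Om rnu" "{..<n}" by (rule product_prob_spaceI) (rule prob_space_Om)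
  let ?P = "PiM {..<n} (\<lambda>_. Om rnu)"
  define \<beta> where "\<beta> = (\<lambda>w. (\<Sum>i<n. of_bool (w i IB) :: real) / real n)"
  have gok: "\<And>j. 0 \<le> G j j \<and> G j j \<le> 1" by (rule Gjj_01)
  have pt: "Sf n Fnu (\<lambda>j. G j j) w \<le> 1/2 + \<bar>\<beta> w - 1/2\<bar>" for w
  proof (rule Sf_le)
    fix j
    define a where "a = (\<Sum>i<n. of_bool (Fnu (w i) j) :: real) / real n"
    have "(\<Sum>i<n. of_bool (Fnu (w i) j) :: real) \<le> (\<Sum>i<n. of_bool (w i IB))"
      by (intro sum_mono) (auto simp: Fnu_def)
    then have a1: "a \<le> \<beta> w" unfolding a_def \<beta>_def by (simp add: divide_right_mono)
    have a0: "0 \<le> a" unfolding a_def using avg_bounds[of "\<lambda>i. Fnu (w i) j" n] by simp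
    have g: "0 \<le> G j j" "G j j \<le> 1/2" using Gjj_bounds[of j] Lp_le[of "cl j"] by auto
    show "\<bar>(\<Sum>i<n. of_bool (Fnu (w i) j)) / real n - G j j\<bar> \<le> 1/2 + \<bar>\<beta> w - 1/2\<bar>"
      using a0 a1 g unfolding a_def[symmetric] by linarith
  qed
  have bm: "\<beta> \<in> borel_measurable ?P" using avg_int[of n "\<lambda>w i. w i IB" rnu] Om_coord_pred by (simp add: \<beta>_def)
  have bi: "integrable ?P (\<lambda>w. \<bar>\<beta> w - 1/2\<bar>)"
  proof (intro bounded_integrable[OF P.prob_space_axioms, where B=1] borel_measurable_abs borel_measurable_diff bm)
    fix w
    have "0 \<le> \<beta> w \<and> \<beta> w \<le> 1" using avg_bounds[of "\<lambda>i. w i IB" n] unfolding \<beta>_def by simp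
    then show "\<bar>\<bar>\<beta> w - 1/2\<bar>\<bar> \<le> 1" by auto
  qed simp
  have "Delta n nu \<le> (\<integral>w. 1/2 + \<bar>\<beta> w - 1/2\<bar> \<partial>?P)"
    unfolding Delta_nu using bi pt by (intro integral_mono Sf_int[OF gok Fnu_j]) auto
  also have "\<dots> = 1/2 + (\<integral>w. \<bar>\<beta> w - 1/2\<bar> \<partial>?P)" using bi by (simp add: P.prob_space)
  also have "(\<integral>w. \<bar>\<beta> w - 1/2\<bar> \<partial>?P) \<le> e + 1 / (real n * e)"
  proof -
    have "(\<integral>xs. \<bar>(\<Sum>i<n. (\<lambda>\<omega>. of_bool (\<omega> IB) :: real) (xs i)) / real n - (\<integral>x. of_bool (x IB) \<partial>Om rnu)\<bar> \<partial>?P) \<le> e + 1 / (real n * e)"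
      by (rule lln[OF prob_space_Om meas_coord_real _ n e]) auto
    then show ?thesis using E_coord[where r=rnu and t=IB, OF rnu_ok] by (simp add: \<beta>_def rnu_def)
  qed
  finally show ?thesis by simp
qed

definition JC :: "nat \<Rightarrow> nat set" where "JC C = prod_encode ` (SIGMA c:{..C}. {..<Mc c})"
definition TC :: "nat \<Rightarrow> (idx \<Rightarrow> bool) \<Rightarrow> bool" where "TC C \<omega> = (\<exists>c>C. \<omega> (IY c))"

lemma finite_JC: "finite (JC C)" unfolding JC_def by auto

lemma TC_meas: "TC C \<in> measurable (Om r) (count_space UNIV)"
  unfolding TC_def by measurable

lemma E_avg_gen:
  assumes Q: "Q \<in> measurable (Om r) (count_space UNIV)" and n: "n > 0"
  shows "(\<integral>w. (\<Sum>i<n. of_bool (Q (w i)) :: real) / real n \<partial>PiM {..<n} (\<lambda>_. Om r)) = (\<integral>\<omega>. of_bool (Q \<omega>) \<partial>Om r)"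
proof -
  interpret product_prob_space "\<lambda>_. Om r" "{..<n}" by (rule product_prob_spaceI) (rule prob_space_Om)
  have qm: "(\<lambda>\<omega>. of_bool (Q \<omega>) :: real) \<in> borel_measurable (Om r)" by (rule measurable_compose[OF Q]) simp
  have "(\<integral>w. (\<Sum>i<n. of_bool (Q (w i)) :: real) \<partial>PiM {..<n} (\<lambda>_. Om r)) = (\<Sum>i<n. \<integral>w. of_bool (Q (w i)) \<partial>PiM {..<n} (\<lambda>_. Om r))"
    using qm by (intro Bochner_Integration.integral_sum)
       (auto intro!: bounded_integrable[OF P.prob_space_axioms, where B=1] meas_comp_PiM[of _ _ "\<lambda>\<omega>. of_bool (Q \<omega>)"])
  also have "\<dots> = (\<Sum>i<n. (\<integral>\<omega>. of_bool (Q \<omega>) \<partial>Om r))"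
  proof (intro sum.cong refl)
    fix i assume i: "i \<in> {..<n}"
    have "(\<integral>x. (\<lambda>\<omega>. of_bool (Q \<omega>) :: real) (x i) \<partial>PiM {..<n} (\<lambda>_. Om r)) = (\<integral>\<omega>. of_bool (Q \<omega>) \<partial>Om r)"
      by (rule PiM_single[OF prob_space_Om _ _ qm, where B=1]) (use i in auto)
    then show "(\<integral>w. of_bool (Q (w i)) \<partial>PiM {..<n} (\<lambda>_. Om r)) = (\<integral>\<omega>. of_bool (Q \<omega>) \<partial>Om r :: real)" by simp
  qed
  finally show ?thesis using n by simp
qed

lemma measure_coord: "(\<And>t. 0 \<le> r t \<and> r t \<le> 1) \<Longrightarrow> measure (Om r) {\<omega>. \<omega> t} = r t"
proof -
  assume rok: "\<And>t. 0 \<le> r t \<and> r t \<le> 1"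
  have "(\<lambda>\<omega>. of_bool (\<omega> t) :: real) = indicator {\<omega>. \<omega> t}" by (auto simp: indicator_def)
  then show ?thesis using E_coord[where r=r and t=t, OF rok] by (simp add: space_Om)
qed

lemma Lp_shift: "Lp (c + Suc C) = Lp C * (1/2) ^ Suc c"
  unfolding Lp_def by (simp add: power_add power_one_over field_simps)

lemma prob_TC: "(\<integral>\<omega>. of_bool (TC C \<omega>) \<partial>Om rmu) \<le> 4 * Lp C"
proof -
  interpret prob_space "Om rmu" by (rule prob_space_Om)
  have eq1: "(\<lambda>\<omega>. of_bool (TC C \<omega>) :: real) = indicator {\<omega>. TC C \<omega>}" by (auto simp: indicator_def)
  have eq2: "{\<omega>. TC C \<omega>} = (\<Union>c. {\<omega>. \<omega> (IY (c + Suc C))})"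
  proof (rule set_eqI, rule iffI)
    fix \<omega> assume "\<omega> \<in> {\<omega>. TC C \<omega>}"
    then obtain c where c: "c > C" "\<omega> (IY c)" by (auto simp: TC_def)
    then have "\<omega> (IY ((c - Suc C) + Suc C))" by simp
    then show "\<omega> \<in> (\<Union>c. {\<omega>. \<omega> (IY (c + Suc C))})" by blast
  next
    fix \<omega> assume "\<omega> \<in> (\<Union>c. {\<omega>. \<omega> (IY (c + Suc C))})"
    then obtain c where "\<omega> (IY (c + Suc C))" by auto
    then show "\<omega> \<in> {\<omega>. TC C \<omega>}" unfolding TC_def by (intro CollectI exI[of _ "c + Suc C"]) auto
  qed
  have mc: "measure (Om rmu) {\<omega>. \<omega> (IY (c + Suc C))} = dm (c + Suc C)" for c
    using measure_coord[where r=rmu and t="IY (c + Suc C)", OF rmu_ok] by (simp add: rmu_def)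
  have bnd: "dm (c + Suc C) \<le> 2 * Lp C * (1/2) ^ c" for c
    using dm_bounds[of "c + Suc C"] Lp_shift[of c C] by simp
  have sg: "summable (\<lambda>c. 2 * Lp C * (1/2::real) ^ c)" by (intro summable_mult summable_geometric) simp
  have sd: "summable (\<lambda>c. dm (c + Suc C))"
    by (rule summable_comparison_test[OF _ sg]) (use bnd dm_bounds in auto)
  have "(\<integral>\<omega>. of_bool (TC C \<omega>) \<partial>Om rmu) = measure (Om rmu) {\<omega>. TC C \<omega>}"
    by (simp add: eq1 space_Om)
  also have "\<dots> = measure (Om rmu) (\<Union>c. {\<omega>. \<omega> (IY (c + Suc C))})"
    by (simp only: eq2)
  also have "\<dots> \<le> (\<Sum>c. measure (Om rmu) {\<omega>. \<omega> (IY (c + Suc C))})"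
  proof (rule finite_measure_subadditive_countably)
    show "range (\<lambda>c. {\<omega>. \<omega> (IY (c + Suc C))}) \<subseteq> sets (Om rmu)"
    proof safe
      fix c
      have "(\<lambda>\<omega>. \<omega> (IY (c + Suc C))) \<in> measurable (Om rmu) (count_space UNIV)" by (rule meas_coord)
      then have "{\<omega> \<in> space (Om rmu). \<omega> (IY (c + Suc C))} \<in> sets (Om rmu)" by measurable
      then show "{\<omega>. \<omega> (IY (c + Suc C))} \<in> sets (Om rmu)" by (simp add: space_Om)
    qed
    show "summable (\<lambda>c. measure (Om rmu) {\<omega>. \<omega> (IY (c + Suc C))})" using sd by (simp only: mc)
  qed
  also have "\<dots> = (\<Sum>c. dm (c + Suc C))" by (simp only: mc)
  also have "\<dots> \<le> (\<Sum>c. 2 * Lp C * (1/2::real) ^ c)" by (rule suminf_le[OF bnd sd sg])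
  also have "\<dots> = 2 * Lp C * (\<Sum>c. (1/2::real) ^ c)" by (rule suminf_mult) (simp add: summable_geometric)
  also have "\<dots> = 4 * Lp C" by (simp add: suminf_geometric)
  finally show ?thesis .
qed

lemma mean_mu_Om: "(\<integral>\<omega>. of_bool (Fmu \<omega> j) \<partial>Om rmu) = G j j"
proof -
  have "(\<lambda>\<omega>. of_bool (Fmu \<omega> j) * of_bool (Fmu \<omega> j) :: real) = (\<lambda>\<omega>. of_bool (Fmu \<omega> j))" by auto
  then show ?thesis using gram_mu[of j j] by simp
qed

lemma mu_upper:
  assumes n: "n > 0" and e: "e > 0"
  shows "Delta n mu \<le> real (card (JC C)) * (e + 1 / (real n * e)) + 5 * Lp C"
proof -
  interpret product_prob_space "\<lambda>_. Om rmu" "{..<n}" by (rule product_prob_spaceI) (rule prob_space_Om)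
  let ?P = "PiM {..<n} (\<lambda>_. Om rmu)"
  have gok: "\<And>j. 0 \<le> G j j \<and> G j j \<le> 1" by (rule Gjj_01)
  define dev where "dev = (\<lambda>j w. \<bar>(\<Sum>i<n. of_bool (Fmu (w i) j) :: real) / real n - G j j\<bar>)"
  define tav where "tav = (\<lambda>w. (\<Sum>i<n. of_bool (TC C (w i)) :: real) / real n)"
  have dev0: "0 \<le> dev j w" for j w unfolding dev_def by simp
  have tav0: "0 \<le> tav w" for w unfolding tav_def using avg_bounds[of "\<lambda>i. TC C (w i)" n] by simp
  have pt: "Sf n Fmu (\<lambda>j. G j j) w \<le> (\<Sum>j\<in>JC C. dev j w) + tav w + Lp C" for w
  proof (rule Sf_le)
    fix j
    show "\<bar>(\<Sum>i<n. of_bool (Fmu (w i) j)) / real n - G j j\<bar> \<le> (\<Sum>j\<in>JC C. dev j w) + tav w + Lp C"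
    proof (cases "j \<in> JC C")
      case True
      have "dev j w \<le> (\<Sum>j\<in>JC C. dev j w)" using True finite_JC dev0 by (intro member_le_sum) auto
      then show ?thesis using tav0[of w] Lp_pos[of C] by (simp add: dev_def)
    next
      case notin: False
      show ?thesis
      proof (cases "kk j < Mc (cl j)")
        case False
        then have "(\<Sum>i<n. of_bool (Fmu (w i) j) :: real) = 0" by (simp add: Fmu_def)
        moreover have "G j j = 0" using False by (simp add: Gjj)
        moreover have "0 \<le> (\<Sum>j\<in>JC C. dev j w)" using dev0 by (simp add: sum_nonneg)
        ultimately show ?thesis using tav0[of w] Lp_pos[of C] by simp
      next
        case True
        have "C < cl j"
        proof (rule ccontr)
          assume "\<not> C < cl j"
          then have "j \<in> JC C" unfolding JC_def using True enc_clkk[of j] by (auto intro!: image_eqI[where x="(cl j, kk j)"])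
          then show False using notin by simp
        qed
        then have "(\<Sum>i<n. of_bool (Fmu (w i) j) :: real) \<le> (\<Sum>i<n. of_bool (TC C (w i)))"
          by (intro sum_mono) (auto simp: Fmu_def TC_def)
        then have a1: "(\<Sum>i<n. of_bool (Fmu (w i) j) :: real) / real n \<le> tav w" unfolding tav_def by (simp add: divide_right_mono)
        have a0: "0 \<le> (\<Sum>i<n. of_bool (Fmu (w i) j) :: real) / real n" using avg_bounds[of "\<lambda>i. Fmu (w i) j" n] by simp
        have g: "0 \<le> G j j" "G j j \<le> Lp C" using Gjj_bounds[of j] Lp_mono[of C "cl j"] \<open>C < cl j\<close> by auto
        have "0 \<le> (\<Sum>j\<in>JC C. dev j w)" using dev0 by (simp add: sum_nonneg)
        then show ?thesis using a0 a1 g by linarith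
      qed
    qed
  qed
  have devm: "(\<lambda>w. dev j w) \<in> borel_measurable ?P" for j
  proof -
    have "(\<lambda>w. of_bool (Fmu (w i) j) :: real) \<in> borel_measurable ?P" if "i < n" for i
      using that Fmu_j by (intro meas_comp_PiM[of i _ "\<lambda>\<omega>. of_bool (Fmu \<omega> j)"] measurable_compose[OF Fmu_j]) auto
    then show ?thesis unfolding dev_def
      by (intro borel_measurable_abs borel_measurable_diff borel_measurable_divide borel_measurable_sum) auto
  qed
  have devi: "integrable ?P (\<lambda>w. dev j w)" for j
    using dev_bound[OF gok] by (intro bounded_integrable[OF P.prob_space_axioms devm, where B=1]) (auto simp: dev_def)
  have tavi: "integrable ?P tav" unfolding tav_def
  proof (rule avg_int[where P="\<lambda>w i. TC C (w i)"])
    fix i assume i: "i < n"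
    show "(\<lambda>w. TC C (w i)) \<in> measurable ?P (count_space UNIV)"
    proof (rule measurable_compose[of "\<lambda>w. w i" _ "Om rmu"])
      show "(\<lambda>w. w i) \<in> ?P \<rightarrow>\<^sub>M Om rmu" using i by (intro measurable_component_singleton) auto
    qed (rule TC_meas)
  qed
  have Edev: "(\<integral>w. dev j w \<partial>?P) \<le> e + 1 / (real n * e)" for j
  proof -
    have "(\<integral>xs. \<bar>(\<Sum>i<n. (\<lambda>\<omega>. of_bool (Fmu \<omega> j) :: real) (xs i)) / real n - (\<integral>x. of_bool (Fmu x j) \<partial>Om rmu)\<bar> \<partial>?P) \<le> e + 1 / (real n * e)"
      by (rule lln[OF prob_space_Om _ _ n e]) (auto intro: measurable_compose[OF Fmu_j])
    then show ?thesis by (simp add: dev_def mean_mu_Om)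
  qed
  have Etav: "(\<integral>w. tav w \<partial>?P) \<le> 4 * Lp C"
    unfolding tav_def using E_avg_gen[OF TC_meas n, of rmu] prob_TC[of C] by simp
  have "Delta n mu \<le> (\<integral>w. (\<Sum>j\<in>JC C. dev j w) + tav w + Lp C \<partial>?P)"
    unfolding Delta_mu using pt devi tavi
    by (intro integral_mono Sf_int[OF gok Fmu_j] Bochner_Integration.integrable_add Bochner_Integration.integrable_sum) auto
  also have "\<dots> = (\<Sum>j\<in>JC C. (\<integral>w. dev j w \<partial>?P)) + (\<integral>w. tav w \<partial>?P) + Lp C"
    using devi tavi by (simp add: Bochner_Integration.integrable_sum Bochner_Integration.integral_sum P.prob_space)
  also have "\<dots> \<le> (\<Sum>j\<in>JC C. e + 1 / (real n * e)) + 4 * Lp C + Lp C"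
    using Edev Etav by (intro add_mono sum_mono) auto
  finally show ?thesis by simp
qed

lemma lim_aux: "(\<lambda>n. 1 / sqrt (real n) + 1 / (real n * (1 / sqrt (real n)))) \<longlonglongrightarrow> 0"
  by real_asymp

lemma lim_low: "(\<lambda>n. 1/2 - Lp n - 1 / (real n + 1)) \<longlonglongrightarrow> 1/2"
  unfolding Lp_def by real_asymp

lemma Delta_mu_nonneg: "0 \<le> Delta n mu"
  unfolding Delta_mu by (intro integral_nonneg_AE AE_I2 Sf_nonneg Gjj_01)

lemma nu_lim: "(\<lambda>n. Delta n nu) \<longlonglongrightarrow> 1/2"
proof (rule tendsto_sandwich[OF _ _ lim_low])
  show "\<forall>\<^sub>F n in sequentially. 1/2 - Lp n - 1 / (real n + 1) \<le> Delta n nu"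
    using eventually_gt_at_top[of 0] by eventually_elim (rule nu_lower)
  show "\<forall>\<^sub>F n in sequentially. Delta n nu \<le> 1/2 + (1 / sqrt (real n) + 1 / (real n * (1 / sqrt (real n))))"
    using eventually_gt_at_top[of 0] by eventually_elim (rule nu_upper, auto)
  show "(\<lambda>n. 1/2 + (1 / sqrt (real n) + 1 / (real n * (1 / sqrt (real n))))) \<longlonglongrightarrow> 1/2"
    using tendsto_add[OF tendsto_const lim_aux, of "1/2"] by simp
qed

lemma mu_lim: "(\<lambda>n. Delta n mu) \<longlonglongrightarrow> 0"
proof (rule order_tendstoI)
  fix a :: real assume "a < 0"
  then show "\<forall>\<^sub>F n in sequentially. a < Delta n mu"
    using Delta_mu_nonneg by (intro always_eventually) (auto intro: less_le_trans)
next
  fix a :: real assume a: "0 < a"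
  obtain C where C: "(1/2::real) ^ C < a / 10" using real_arch_pow_inv[of "a/10" "1/2::real"] a by auto
  have LpC: "5 * Lp C < a / 2"
  proof -
    have "Lp C \<le> (1/2) ^ C" unfolding Lp_def by (simp add: power_one_over divide_le_eq)
    then show ?thesis using C by simp
  qed
  define K where "K = real (card (JC C))"
  have "(\<lambda>n. K * (1 / sqrt (real n) + 1 / (real n * (1 / sqrt (real n))))) \<longlonglongrightarrow> K * 0"
    by (intro tendsto_mult tendsto_const lim_aux)
  then have "\<forall>\<^sub>F n in sequentially. K * (1 / sqrt (real n) + 1 / (real n * (1 / sqrt (real n)))) < a / 2"
    using a by (intro order_tendstoD(2)) auto
  then show "\<forall>\<^sub>F n in sequentially. Delta n mu < a"
    using eventually_gt_at_top[of 0]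
  proof eventually_elim
    case (elim n)
    have "Delta n mu \<le> K * (1 / sqrt (real n) + 1 / (real n * (1 / sqrt (real n)))) + 5 * Lp C"
      unfolding K_def using elim(2) by (intro mu_upper) auto
    then show ?case using elim(1) LpC by linarith
  qed
qed

theorem theorem3:
  shows "\<exists>\<mu> \<nu>. prob_space \<mu> \<and> sets \<mu> = sets bitspace \<and>
                prob_space \<nu> \<and> sets \<nu> = sets bitspace \<and>
                (\<forall>i j. (\<integral> x. of_bool (x i) * of_bool (x j) \<partial>\<mu>) = (\<integral> x. of_bool (x i) * of_bool (x j) \<partial>\<nu> :: real)) \<and>
                (\<lambda>n. Delta n \<mu>) \<longlonglongrightarrow> 0 \<and>
                (\<lambda>n. Delta n \<nu>) \<longlonglongrightarrow> 1/2"
proof (intro exI conjI allI)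
  show "prob_space mu" unfolding mu_def by (rule prob_space.prob_space_distr[OF prob_space_Om Fmu_meas])
  show "prob_space nu" unfolding nu_def by (rule prob_space.prob_space_distr[OF prob_space_Om Fnu_meas])
  show "sets mu = sets bitspace" by (simp add: mu_def)
  show "sets nu = sets bitspace" by (simp add: nu_def)
  show "(\<integral> x. of_bool (x i) * of_bool (x j) \<partial>mu) = (\<integral> x. of_bool (x i) * of_bool (x j) \<partial>nu :: real)" for i j
    by (simp add: gram_mu' gram_nu')
  show "(\<lambda>n. Delta n mu) \<longlonglongrightarrow> 0" by (rule mu_lim)
  show "(\<lambda>n. Delta n nu) \<longlonglongrightarrow> 1/2" by (rule nu_lim)
qed

end
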